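(* (1) The region $\mathcal R(D_x,D_z)$ is convex. (2) The region $\mathcal R(D_x,D_z)$ is unchanged if, in its definition, the auxiliary alphabets are restricted to satisfy $|\mathcal U|\le|\mathcal Y|+4$, $|\mathcal V|\le|\mathcal Z||\mathcal U|+3$, $|\mathcal W|\le|\mathcal U||\mathcal V||\mathcal X|+1$.
   Context: Let $\mathcal X,\mathcal Y,\mathcal Z$ be finite alphabets and $(X,Y,Z)\sim p(x,y,z)=p(x,y)p(z|x)$ (so $Y-X-Z$ is Markov). Let $\hat{\mathcal X},\hat{\mathcal Z}$ be finite alphabets and $d_x:\mathcal X\times\hat{\mathcal X}\to[0,\infty)$, $d_z:\mathcal Z\times\hat{\mathcal Z}\to[0,\infty)$. $\mathcal R(D_x,D_z)$ is the set of all rate triples $(R_1,R_2,R_3)$ such that $R_1\ge I(Y;U|Z)$, $R_2\ge I(Z;V|U,X)$, $R_3\ge I(X;W|U,V,Z)$ for some finite-alphabet random variables $U\in\mathcal U,V\in\mathcal V,W\in\mathcal W$ with joint distribution $p(x,y,z,u,v,w)=p(x,y)p(z|x)p(u|y)p(v|u,z)p(w|u,v,x)$ and deterministic functions $\hat X(U,W,Z)$, $\hat Z(U,V,X)$ with $\mathbb E\, d_x(X,\hat X(U,W,Z))\le D_x$ and $\mathbb E\, d_z(Z,\hat Z(U,V,X))\le D_z$. *)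

theory Defs
  imports "HOL-Analysis.Analysis"
begin

text \<open>Discrete information measures on a finite outcome set Om with weights P.
  Entropies in bits; 0 log 0 = 0 holds since log 2 0 = 0 in Isabelle.\<close>

definition marg :: "'o set \<Rightarrow> ('o \<Rightarrow> real) \<Rightarrow> ('o \<Rightarrow> 'a) \<Rightarrow> 'a \<Rightarrow> real" where
  "marg Om P A a = (\<Sum>\<omega>\<in>{\<omega>\<in>Om. A \<omega> = a}. P \<omega>)"

definition ent :: "'o set \<Rightarrow> ('o \<Rightarrow> real) \<Rightarrow> ('o \<Rightarrow> 'a) \<Rightarrow> real" where
  "ent Om P A = - (\<Sum>a\<in>A ` Om. marg Om P A a * log 2 (marg Om P A a))"

definition cmi :: "'o set \<Rightarrow> ('o \<Rightarrow> real) \<Rightarrow> ('o \<Rightarrow> 'a) \<Rightarrow> ('o \<Rightarrow> 'b) \<Rightarrow> ('o \<Rightarrow> 'c) \<Rightarrow> real" where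
  "cmi Om P A B C = ent Om P (\<lambda>\<omega>. (A \<omega>, C \<omega>)) + ent Om P (\<lambda>\<omega>. (B \<omega>, C \<omega>))
                    - ent Om P (\<lambda>\<omega>. (A \<omega>, B \<omega>, C \<omega>)) - ent Om P C"

definition outcomes :: "nat \<Rightarrow> nat \<Rightarrow> nat \<Rightarrow> ('x::finite \<times> 'y::finite \<times> 'z::finite \<times> nat \<times> nat \<times> nat) set" where
  "outcomes nu nv nw = {(x,y,z,u,v,w). u < nu \<and> v < nv \<and> w < nw}"

definition joint ::
  "('x \<Rightarrow> 'y \<Rightarrow> real) \<Rightarrow> ('x \<Rightarrow> 'z \<Rightarrow> real) \<Rightarrow> ('y \<Rightarrow> nat \<Rightarrow> real)
   \<Rightarrow> (nat \<Rightarrow> 'z \<Rightarrow> nat \<Rightarrow> real) \<Rightarrow> (nat \<Rightarrow> nat \<Rightarrow> 'x \<Rightarrow> nat \<Rightarrow> real)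
   \<Rightarrow> ('x \<times> 'y \<times> 'z \<times> nat \<times> nat \<times> nat) \<Rightarrow> real" where
  "joint pxy pzx pu pv pw = (\<lambda>(x,y,z,u,v,w). pxy x y * pzx x z * pu y u * pv u z v * pw u v x w)"

text \<open>Rate region, with the auxiliary alphabet sizes restricted by the predicate Bd.
  pu y u = p(u|y), pv u z v = p(v|u,z), pw u v x w = p(w|u,v,x).\<close>
definition region_bd ::
  "(nat \<Rightarrow> nat \<Rightarrow> nat \<Rightarrow> bool) \<Rightarrow> ('x::finite \<Rightarrow> 'y::finite \<Rightarrow> real) \<Rightarrow> ('x \<Rightarrow> 'z::finite \<Rightarrow> real)
   \<Rightarrow> ('x \<Rightarrow> 'xh \<Rightarrow> real) \<Rightarrow> ('z \<Rightarrow> 'zh \<Rightarrow> real) \<Rightarrow> real \<Rightarrow> real \<Rightarrow> (real \<times> real \<times> real) set" where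
  "region_bd Bd pxy pzx dx dz Dx Dz =
    {(R1, R2, R3). \<exists>nu nv nw pu pv pw (xhat :: nat \<Rightarrow> nat \<Rightarrow> 'z \<Rightarrow> 'xh) (zhat :: nat \<Rightarrow> nat \<Rightarrow> 'x \<Rightarrow> 'zh).
       Bd nu nv nw \<and>
       (\<forall>y u. 0 \<le> pu y u) \<and> (\<forall>y. (\<Sum>u<nu. pu y u) = 1) \<and>
       (\<forall>u z v. 0 \<le> pv u z v) \<and> (\<forall>u<nu. \<forall>z. (\<Sum>v<nv. pv u z v) = 1) \<and>
       (\<forall>u v x w. 0 \<le> pw u v x w) \<and> (\<forall>u<nu. \<forall>v<nv. \<forall>x. (\<Sum>w<nw. pw u v x w) = 1) \<and>
       (let Om = outcomes nu nv nw; P = joint pxy pzx pu pv pw;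
            X = (\<lambda>(x,y,z,u,v,w). x); Y = (\<lambda>(x,y,z,u,v,w). y); Z = (\<lambda>(x,y,z,u,v,w). z);
            U = (\<lambda>(x,y,z,u,v,w). u); V = (\<lambda>(x,y,z,u,v,w). v); W = (\<lambda>(x,y,z,u,v,w). w) in
        R1 \<ge> cmi Om P Y U Z \<and>
        R2 \<ge> cmi Om P Z V (\<lambda>\<omega>. (U \<omega>, X \<omega>)) \<and>
        R3 \<ge> cmi Om P X W (\<lambda>\<omega>. (U \<omega>, V \<omega>, Z \<omega>)) \<and>
        (\<Sum>\<omega>\<in>Om. P \<omega> * dx (X \<omega>) (xhat (U \<omega>) (W \<omega>) (Z \<omega>))) \<le> Dx \<and>
        (\<Sum>\<omega>\<in>Om. P \<omega> * dz (Z \<omega>) (zhat (U \<omega>) (V \<omega>) (X \<omega>))) \<le> Dz)}"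

definition region where
  "region = region_bd (\<lambda>_ _ _. True)"

end

theory Submission
  imports Defs
begin


lemma homog_nontrivial:
  fixes f :: "'i \<Rightarrow> 'e \<Rightarrow> real"
  assumes "finite E"
  shows "finite S \<Longrightarrow> card E < card S \<Longrightarrow>
    \<exists>\<theta>. (\<exists>i\<in>S. \<theta> i \<noteq> 0) \<and> (\<forall>e\<in>E. (\<Sum>i\<in>S. \<theta> i * f i e) = 0)"
  using assms
proof (induction E arbitrary: S f rule: finite_induct)
  case empty
  then obtain i where "i \<in> S" by fastforce
  then show ?case by (intro exI[of _ "\<lambda>_. 1"]) auto
next
  case (insert e E)
  show ?case
  proof (cases "\<forall>i\<in>S. f i e = 0")
    case True
    from insert.IH[of S f] insert.prems insert.hyps obtain \<theta> where
      "\<exists>i\<in>S. \<theta> i \<noteq> 0" "\<forall>x\<in>E. (\<Sum>i\<in>S. \<theta> i * f i x) = 0" by auto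
    then show ?thesis using True by (intro exI[of _ \<theta>]) auto
  next
    case False
    then obtain i0 where i0: "i0 \<in> S" "f i0 e \<noteq> 0" by auto
    define g where "g i x = f i x - f i e / f i0 e * f i0 x" for i x
    have "card E < card (S - {i0})" using insert.prems insert.hyps i0 by auto
    from insert.IH[OF _ this, of g] insert.prems obtain \<theta>' where
      th': "\<exists>i\<in>S - {i0}. \<theta>' i \<noteq> 0" "\<forall>x\<in>E. (\<Sum>i\<in>S - {i0}. \<theta>' i * g i x) = 0" by auto
    define \<theta> where "\<theta> i = (if i = i0 then - (\<Sum>j\<in>S - {i0}. \<theta>' j * f j e) / f i0 e else \<theta>' i)" for i
    have split: "(\<Sum>i\<in>S. \<theta> i * f i x) = \<theta> i0 * f i0 x + (\<Sum>i\<in>S - {i0}. \<theta>' i * f i x)" for x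
    proof -
      have "(\<Sum>i\<in>S. \<theta> i * f i x) = \<theta> i0 * f i0 x + (\<Sum>i\<in>S - {i0}. \<theta> i * f i x)"
        using i0 insert.prems by (simp add: sum.remove)
      also have "(\<Sum>i\<in>S - {i0}. \<theta> i * f i x) = (\<Sum>i\<in>S - {i0}. \<theta>' i * f i x)"
        by (rule sum.cong) (auto simp: \<theta>_def)
      finally show ?thesis .
    qed
    have "\<forall>x\<in>insert e E. (\<Sum>i\<in>S. \<theta> i * f i x) = 0"
    proof
      fix x assume x: "x \<in> insert e E"
      show "(\<Sum>i\<in>S. \<theta> i * f i x) = 0"
      proof (cases "x = e")
        case True
        then show ?thesis using i0 unfolding split by (simp add: \<theta>_def)
      next
        case False
        then have xE: "x \<in> E" using x by auto
        have "(\<Sum>i\<in>S - {i0}. \<theta>' i * f i x) = (\<Sum>i\<in>S - {i0}. \<theta>' i * g i x)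
               + (\<Sum>i\<in>S - {i0}. \<theta>' i * f i e) / f i0 e * f i0 x"
          by (simp add: g_def algebra_simps sum_subtractf sum_distrib_left sum_distrib_right sum_divide_distrib)
        then show ?thesis using th'(2) xE unfolding split by (simp add: \<theta>_def)
      qed
    qed
    moreover have "\<exists>i\<in>S. \<theta> i \<noteq> 0" using th'(1) by (auto simp: \<theta>_def)
    ultimately show ?thesis by blast
  qed
qed

lemma support_reduce:
  fixes a :: "'i \<Rightarrow> 'j \<Rightarrow> real" and c :: "'i \<Rightarrow> 'k \<Rightarrow> real" and ob :: "'i \<Rightarrow> real"
  assumes fin: "finite I" "finite J" "finite K"
  shows "(\<forall>i\<in>I. lam i \<ge> 0) \<Longrightarrow> (\<forall>i\<in>I. lam i \<noteq> 0 \<longrightarrow> (\<Sum>j\<in>J. a i j) > 0) \<Longrightarrow>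
    \<exists>mu. (\<forall>i\<in>I. mu i \<ge> 0) \<and> (\<forall>i\<in>I. mu i \<noteq> 0 \<longrightarrow> lam i \<noteq> 0) \<and>
      card {i\<in>I. mu i \<noteq> 0} \<le> card J + card K \<and>
      (\<forall>j\<in>J. (\<Sum>i\<in>I. mu i * a i j) = (\<Sum>i\<in>I. lam i * a i j)) \<and>
      (\<forall>k\<in>K. (\<Sum>i\<in>I. mu i * c i k) = (\<Sum>i\<in>I. lam i * c i k)) \<and>
      (\<Sum>i\<in>I. mu i * ob i) \<le> (\<Sum>i\<in>I. lam i * ob i)"
proof (induction "card {i\<in>I. lam i \<noteq> 0}" arbitrary: lam rule: less_induct)
  case less
  define S where "S = {i\<in>I. lam i \<noteq> 0}"
  have finS: "finite S" using fin by (simp add: S_def)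
  have lampos: "\<And>i. i \<in> S \<Longrightarrow> lam i > 0" using less.prems by (force simp: S_def)
  show ?case
  proof (cases "card S \<le> card J + card K")
    case True
    then show ?thesis using less.prems by (intro exI[of _ lam]) (auto simp: S_def)
  next
    case False
    define f where "f i e = (case e of Inl j \<Rightarrow> a i j | Inr k \<Rightarrow> c i k)" for i e
    have "card (J <+> K) < card S" using False fin by (simp add: card_Plus)
    from homog_nontrivial[OF _ finS this, of f] fin obtain \<theta>0 where
      th0: "\<exists>i\<in>S. \<theta>0 i \<noteq> 0" "\<forall>e\<in>J <+> K. (\<Sum>i\<in>S. \<theta>0 i * f i e) = 0" by auto
    define sg :: real where "sg = (if (\<Sum>i\<in>S. \<theta>0 i * ob i) \<ge> 0 then 1 else -1)"
    define \<theta> where "\<theta> i = sg * \<theta>0 i" for i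
    have sg: "sg \<noteq> 0" by (simp add: sg_def)
    have thnz: "\<exists>i\<in>S. \<theta> i \<noteq> 0" using th0(1) sg by (auto simp: \<theta>_def)
    have tha: "(\<Sum>i\<in>S. \<theta> i * a i j) = 0" if "j \<in> J" for j
    proof -
      have "(\<Sum>i\<in>S. \<theta> i * a i j) = sg * (\<Sum>i\<in>S. \<theta>0 i * f i (Inl j))"
        by (simp add: \<theta>_def f_def sum_distrib_left mult.assoc)
      then show ?thesis using th0(2) that by auto
    qed
    have thc: "(\<Sum>i\<in>S. \<theta> i * c i k) = 0" if "k \<in> K" for k
    proof -
      have "(\<Sum>i\<in>S. \<theta> i * c i k) = sg * (\<Sum>i\<in>S. \<theta>0 i * f i (Inr k))"
        by (simp add: \<theta>_def f_def sum_distrib_left mult.assoc)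
      then show ?thesis using th0(2) that by auto
    qed
    have thob: "(\<Sum>i\<in>S. \<theta> i * ob i) \<ge> 0"
      by (simp add: \<theta>_def sg_def sum_distrib_left[symmetric] mult.assoc)
    have wsum: "(\<Sum>i\<in>S. \<theta> i * (\<Sum>j\<in>J. a i j)) = 0"
      by (simp add: sum_distrib_left) (subst sum.swap, simp add: tha)
    have "\<exists>i\<in>S. \<theta> i > 0"
    proof (rule ccontr)
      assume nex: "\<not> ?thesis"
      then have le: "\<And>i. i \<in> S \<Longrightarrow> \<theta> i * (\<Sum>j\<in>J. a i j) \<le> 0"
      proof -
        fix i assume iS: "i \<in> S"
        have "\<theta> i \<le> 0" using nex iS by force
        moreover have "(\<Sum>j\<in>J. a i j) \<ge> 0" using iS less.prems by (force simp: S_def)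
        ultimately show "\<theta> i * (\<Sum>j\<in>J. a i j) \<le> 0" by (rule mult_nonpos_nonneg)
      qed
      from thnz obtain i1 where i1: "i1 \<in> S" "\<theta> i1 \<noteq> 0" by auto
      have "\<theta> i1 < 0" using i1 nex by force
      moreover have "(\<Sum>j\<in>J. a i1 j) > 0" using i1 less.prems by (auto simp: S_def)
      ultimately have "\<theta> i1 * (\<Sum>j\<in>J. a i1 j) < 0" by (simp add: mult_neg_pos)
      then have "(\<Sum>i\<in>S. \<theta> i * (\<Sum>j\<in>J. a i j)) < 0"
        using sum_strict_mono_ex1[OF finS, of "\<lambda>i. \<theta> i * (\<Sum>j\<in>J. a i j)" "\<lambda>_. 0"] le i1
        by auto
      then show False using wsum by simp
    qed
    define P where "P = {i\<in>S. \<theta> i > 0}"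
    have finP: "finite P" "P \<noteq> {}" using finS \<open>\<exists>i\<in>S. \<theta> i > 0\<close> by (auto simp: P_def)
    define t where "t = Min ((\<lambda>i. lam i / \<theta> i) ` P)"
    obtain i1 where i1: "i1 \<in> P" "t = lam i1 / \<theta> i1"
    proof -
      have "t \<in> (\<lambda>i. lam i / \<theta> i) ` P" unfolding t_def using finP by (intro Min_in) auto
      then show ?thesis using that by blast
    qed
    have tle: "\<And>i. i \<in> P \<Longrightarrow> t \<le> lam i / \<theta> i" using finP by (auto simp: t_def)
    have tpos: "t > 0" using i1 lampos by (auto simp: P_def)
    define th' where "th' i = (if i \<in> S then \<theta> i else 0)" for i
    define lam' where "lam' i = lam i - t * th' i" for i
    have lam'nn: "\<forall>i\<in>I. lam' i \<ge> 0"
    proof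
      fix i assume iI: "i \<in> I"
      show "lam' i \<ge> 0"
      proof (cases "i \<in> P")
        case True
        then have "t * \<theta> i \<le> lam i" using tle[OF True] by (auto simp: P_def pos_le_divide_eq)
        then show ?thesis using True by (auto simp: lam'_def th'_def P_def)
      next
        case False
        then have "th' i \<le> 0" by (auto simp: th'_def P_def)
        then have "t * th' i \<le> 0" using tpos by (simp add: mult_nonneg_nonpos less_imp_le)
        then show ?thesis using less.prems iI by (auto simp: lam'_def)
      qed
    qed
    have supp: "{i\<in>I. lam' i \<noteq> 0} \<subseteq> S - {i1}"
      using i1 by (auto simp: lam'_def th'_def S_def P_def)
    have cardlt: "card {i\<in>I. lam' i \<noteq> 0} < card {i\<in>I. lam i \<noteq> 0}"
    proof -
      have "card {i\<in>I. lam' i \<noteq> 0} \<le> card (S - {i1})" using supp finS by (intro card_mono) auto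
      also have "\<dots> < card S" using i1 finS card_gt_0_iff[of S] by (auto simp: P_def)
      finally show ?thesis by (simp add: S_def)
    qed
    have sumS: "(\<Sum>i\<in>I. th' i * g i) = (\<Sum>i\<in>S. \<theta> i * g i)" for g :: "'i \<Rightarrow> real"
    proof -
      have "(\<Sum>i\<in>I. th' i * g i) = (\<Sum>i\<in>S. th' i * g i)"
        using fin by (intro sum.mono_neutral_right) (auto simp: th'_def S_def)
      then show ?thesis by (simp add: th'_def)
    qed
    have lin: "(\<Sum>i\<in>I. lam' i * g i) = (\<Sum>i\<in>I. lam i * g i) - t * (\<Sum>i\<in>S. \<theta> i * g i)" for g
      by (simp add: lam'_def algebra_simps sum_subtractf sum_distrib_left sumS[symmetric])
    have prem2: "\<forall>i\<in>I. lam' i \<noteq> 0 \<longrightarrow> (\<Sum>j\<in>J. a i j) > 0"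
      using supp less.prems by (auto simp: S_def)
    from less.hyps[OF cardlt lam'nn prem2] obtain mu where mu:
      "\<forall>i\<in>I. mu i \<ge> 0" "\<forall>i\<in>I. mu i \<noteq> 0 \<longrightarrow> lam' i \<noteq> 0"
      "card {i\<in>I. mu i \<noteq> 0} \<le> card J + card K"
      "\<forall>j\<in>J. (\<Sum>i\<in>I. mu i * a i j) = (\<Sum>i\<in>I. lam' i * a i j)"
      "\<forall>k\<in>K. (\<Sum>i\<in>I. mu i * c i k) = (\<Sum>i\<in>I. lam' i * c i k)"
      "(\<Sum>i\<in>I. mu i * ob i) \<le> (\<Sum>i\<in>I. lam' i * ob i)" by blast
    show ?thesis
    proof (intro exI[of _ mu] conjI)
      show "\<forall>i\<in>I. mu i \<ge> 0" by (fact mu(1))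
      show "\<forall>i\<in>I. mu i \<noteq> 0 \<longrightarrow> lam i \<noteq> 0" using mu(2) supp by (auto simp: S_def)
      show "card {i\<in>I. mu i \<noteq> 0} \<le> card J + card K" by (fact mu(3))
      show "\<forall>j\<in>J. (\<Sum>i\<in>I. mu i * a i j) = (\<Sum>i\<in>I. lam i * a i j)" using mu(4) lin tha by simp
      show "\<forall>k\<in>K. (\<Sum>i\<in>I. mu i * c i k) = (\<Sum>i\<in>I. lam i * c i k)" using mu(5) lin thc by simp
      show "(\<Sum>i\<in>I. mu i * ob i) \<le> (\<Sum>i\<in>I. lam i * ob i)"
        using mu(6) lin[of ob] thob tpos by (smt (verit) mult_nonneg_nonneg)
    qed
  qed
qed


lemma marg_nonneg: "(\<forall>\<omega>\<in>Om. P \<omega> \<ge> 0) \<Longrightarrow> marg Om P A a \<ge> 0"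
  unfolding marg_def by (auto intro: sum_nonneg)

lemma marg_sum:
  assumes "finite Om"
  shows "(\<Sum>a\<in>A ` Om. marg Om P A a * f a) = (\<Sum>\<omega>\<in>Om. P \<omega> * f (A \<omega>))"
proof -
  have "(\<Sum>a\<in>A ` Om. marg Om P A a * f a) = (\<Sum>a\<in>A ` Om. \<Sum>\<omega>\<in>{\<omega>\<in>Om. A \<omega> = a}. P \<omega> * f (A \<omega>))"
    unfolding marg_def by (simp add: sum_distrib_right)
  also have "\<dots> = (\<Sum>\<omega>\<in>Om. P \<omega> * f (A \<omega>))"
    using sum.image_gen[OF assms, of "\<lambda>\<omega>. P \<omega> * f (A \<omega>)" A] by simp
  finally show ?thesis .
qed

lemma marg_cong: "(\<forall>\<omega>\<in>Om. P \<omega> = Q \<omega>) \<Longrightarrow> marg Om P A a = marg Om Q A a"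
  unfolding marg_def by (rule sum.cong) auto

lemma ent_cong: "(\<forall>\<omega>\<in>Om. P \<omega> = Q \<omega>) \<Longrightarrow> ent Om P A = ent Om Q A"
  unfolding ent_def using marg_cong[of Om P Q A] by (metis (no_types, lifting) sum.cong)

lemma cmi_cong: assumes H: "\<forall>\<omega>\<in>Om. P \<omega> = Q \<omega>" shows "cmi Om P A B C = cmi Om Q A B C"
  unfolding cmi_def by (simp only: ent_cong[OF H])

lemma ent_marg_eq: "(\<And>a. a \<in> A ` Om \<Longrightarrow> marg Om P A a = marg Om Q A a) \<Longrightarrow> ent Om P A = ent Om Q A"
  unfolding ent_def by (metis (no_types, lifting) sum.cong)

lemma marg_transport:
  assumes fin: "finite Oa" "finite Ob" and hO: "h ` Oa \<subseteq> Ob" and hinj: "inj_on h Oa"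
    and P: "\<And>\<omega>. \<omega> \<in> Oa \<Longrightarrow> Pb (h \<omega>) = Pa \<omega>"
    and Z: "\<And>\<omega>. \<omega> \<in> Ob - h ` Oa \<Longrightarrow> Pb \<omega> = 0"
    and B: "\<And>\<omega>. \<omega> \<in> Oa \<Longrightarrow> Ba \<omega> = f (Bb (h \<omega>))"
    and finj: "inj_on f (Bb ` h ` Oa)" and b: "b \<in> Bb ` h ` Oa"
  shows "marg Ob Pb Bb b = marg Oa Pa Ba (f b)"
proof -
  have "marg Ob Pb Bb b = (\<Sum>\<omega>\<in>{\<omega>\<in>h ` Oa. Bb \<omega> = b}. Pb \<omega>)"
    unfolding marg_def using fin hO Z by (intro sum.mono_neutral_right) auto
  also have "\<dots> = (\<Sum>\<omega>\<in>{\<omega>\<in>Oa. Bb (h \<omega>) = b}. Pb (h \<omega>))"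
  proof -
    have "{\<omega>\<in>h ` Oa. Bb \<omega> = b} = h ` {\<omega>\<in>Oa. Bb (h \<omega>) = b}" by auto
    moreover have "inj_on h {\<omega>\<in>Oa. Bb (h \<omega>) = b}" using hinj by (rule inj_on_subset) auto
    ultimately show ?thesis by (simp add: sum.reindex)
  qed
  also have "\<dots> = (\<Sum>\<omega>\<in>{\<omega>\<in>Oa. Ba \<omega> = f b}. Pa \<omega>)"
  proof -
    have "{\<omega>\<in>Oa. Bb (h \<omega>) = b} = {\<omega>\<in>Oa. Ba \<omega> = f b}"
      using B finj b by (auto simp: inj_on_def)
    then show ?thesis using P by (intro sum.cong) auto
  qed
  finally show ?thesis unfolding marg_def .
qed

lemma ent_transport:
  assumes fin: "finite Oa" "finite Ob" and hO: "h ` Oa \<subseteq> Ob" and hinj: "inj_on h Oa"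
    and P: "\<And>\<omega>. \<omega> \<in> Oa \<Longrightarrow> Pb (h \<omega>) = Pa \<omega>"
    and Z: "\<And>\<omega>. \<omega> \<in> Ob - h ` Oa \<Longrightarrow> Pb \<omega> = 0"
    and B: "\<And>\<omega>. \<omega> \<in> Oa \<Longrightarrow> Ba \<omega> = f (Bb (h \<omega>))"
    and finj: "inj_on f (Bb ` h ` Oa)"
  shows "ent Oa Pa Ba = ent Ob Pb Bb"
proof -
  let ?phi = "\<lambda>m::real. m * log 2 m"
  have z: "marg Ob Pb Bb b = 0" if "b \<in> Bb ` Ob - Bb ` h ` Oa" for b
  proof -
    have "{\<omega>\<in>Ob. Bb \<omega> = b} \<subseteq> Ob - h ` Oa" using that by blast
    then show ?thesis unfolding marg_def using Z by (intro sum.neutral) blast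
  qed
  have "(\<Sum>b\<in>Bb ` Ob. ?phi (marg Ob Pb Bb b)) = (\<Sum>b\<in>Bb ` h ` Oa. ?phi (marg Ob Pb Bb b))"
    using fin hO z by (intro sum.mono_neutral_right) auto
  also have "\<dots> = (\<Sum>b\<in>Bb ` h ` Oa. ?phi (marg Oa Pa Ba (f b)))"
  proof (rule sum.cong)
    fix b assume "b \<in> Bb ` h ` Oa"
    then show "?phi (marg Ob Pb Bb b) = ?phi (marg Oa Pa Ba (f b))"
      using marg_transport[OF fin hO hinj, where Pb=Pb and Pa=Pa and Ba=Ba and Bb=Bb and f=f and b=b] P Z B finj
      by presburger
  qed simp
  also have "\<dots> = (\<Sum>c\<in>f ` Bb ` h ` Oa. ?phi (marg Oa Pa Ba c))"
    using finj by (simp add: sum.reindex)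
  also have "f ` Bb ` h ` Oa = Ba ` Oa" using B by (auto simp: image_iff)
  finally show ?thesis unfolding ent_def by simp
qed

lemma inj_on_pair:
  assumes "inj_on f (fst ` S)" "inj_on g (snd ` S)"
  shows "inj_on (\<lambda>(a, c). (f a, g c)) S"
  using assms unfolding inj_on_def by (auto simp: image_iff)

lemma cmi_transport:
  assumes fin: "finite Oa" "finite Ob" and hO: "h ` Oa \<subseteq> Ob" and hinj: "inj_on h Oa"
    and P: "\<And>\<omega>. \<omega> \<in> Oa \<Longrightarrow> Pb (h \<omega>) = Pa \<omega>"
    and Z: "\<And>\<omega>. \<omega> \<in> Ob - h ` Oa \<Longrightarrow> Pb \<omega> = 0"
    and A: "\<And>\<omega>. \<omega> \<in> Oa \<Longrightarrow> Aa \<omega> = fa (Ab (h \<omega>))"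
    and B: "\<And>\<omega>. \<omega> \<in> Oa \<Longrightarrow> Ba \<omega> = fb (Bb (h \<omega>))"
    and C: "\<And>\<omega>. \<omega> \<in> Oa \<Longrightarrow> Ca \<omega> = fc (Cb (h \<omega>))"
    and ia: "inj_on fa (Ab ` h ` Oa)" and ib: "inj_on fb (Bb ` h ` Oa)" and ic: "inj_on fc (Cb ` h ` Oa)"
  shows "cmi Oa Pa Aa Ba Ca = cmi Ob Pb Ab Bb Cb"
proof -
  note T = ent_transport[OF fin hO hinj]
  have ia': "inj_on fa ((\<lambda>x. Ab (h x)) ` Oa)" using ia by (simp add: image_image)
  have ib': "inj_on fb ((\<lambda>x. Bb (h x)) ` Oa)" using ib by (simp add: image_image)
  have ic': "inj_on fc ((\<lambda>x. Cb (h x)) ` Oa)" using ic by (simp add: image_image)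
  have im: "fst ` (\<lambda>\<omega>. (X \<omega>, Y \<omega>)) ` S = X ` S" "snd ` (\<lambda>\<omega>. (X \<omega>, Y \<omega>)) ` S = Y ` S"
    for X :: "_ \<Rightarrow> 'q" and Y :: "_ \<Rightarrow> 'r" and S by (auto simp: image_image)
  have 1: "ent Oa Pa (\<lambda>\<omega>. (Aa \<omega>, Ca \<omega>)) = ent Ob Pb (\<lambda>\<omega>. (Ab \<omega>, Cb \<omega>))"
    by (rule T[where f = "\<lambda>(a, c). (fa a, fc c)"]) (auto simp: P Z A C image_image intro!: inj_on_pair ia' ic')
  have 2: "ent Oa Pa (\<lambda>\<omega>. (Ba \<omega>, Ca \<omega>)) = ent Ob Pb (\<lambda>\<omega>. (Bb \<omega>, Cb \<omega>))"
    by (rule T[where f = "\<lambda>(a, c). (fb a, fc c)"]) (auto simp: P Z B C image_image intro!: inj_on_pair ib' ic')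
  have 3: "ent Oa Pa (\<lambda>\<omega>. (Aa \<omega>, Ba \<omega>, Ca \<omega>)) = ent Ob Pb (\<lambda>\<omega>. (Ab \<omega>, Bb \<omega>, Cb \<omega>))"
    by (rule T[where f = "\<lambda>(a, bc). (fa a, (\<lambda>(b, c). (fb b, fc c)) bc)"])
      (auto simp: P Z A B C image_image intro!: inj_on_pair ia' ib' ic')
  have 4: "ent Oa Pa Ca = ent Ob Pb Cb"
    by (rule T[where f = fc]) (auto simp: P Z C ic)
  show ?thesis unfolding cmi_def 1 2 3 4 ..
qed

lemma sum_transport:
  fixes Pa Pb Fa Fb :: "_ \<Rightarrow> real"
  assumes fin: "finite Oa" "finite Ob" and hO: "h ` Oa \<subseteq> Ob" and hinj: "inj_on h Oa"
    and P: "\<And>\<omega>. \<omega> \<in> Oa \<Longrightarrow> Pb (h \<omega>) = Pa \<omega>"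
    and Z: "\<And>\<omega>. \<omega> \<in> Ob - h ` Oa \<Longrightarrow> Pb \<omega> = 0"
    and F: "\<And>\<omega>. \<omega> \<in> Oa \<Longrightarrow> Fa \<omega> = Fb (h \<omega>)"
  shows "(\<Sum>\<omega>\<in>Oa. Pa \<omega> * Fa \<omega>) = (\<Sum>\<omega>\<in>Ob. Pb \<omega> * Fb \<omega>)"
proof -
  have "(\<Sum>\<omega>\<in>Ob. Pb \<omega> * Fb \<omega>) = (\<Sum>\<omega>\<in>h ` Oa. Pb \<omega> * Fb \<omega>)"
    using fin hO Z by (intro sum.mono_neutral_right) auto
  also have "\<dots> = (\<Sum>\<omega>\<in>Oa. Pa \<omega> * Fa \<omega>)"
    using hinj P F by (simp add: sum.reindex)
  finally show ?thesis ..
qed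


lemma xlogx_mult:
  fixes r m :: real assumes "r \<ge> 0" "m \<ge> 0"
  shows "(r * m) * log 2 (r * m) = r * (m * log 2 m) + m * (r * log 2 r)"
proof (cases "r = 0 \<or> m = 0")
  case True then show ?thesis by auto
next
  case False
  then have "r > 0" "m > 0" using assms by auto
  then show ?thesis by (simp add: log_mult algebra_simps)
qed

lemma ent_reweight:
  fixes P :: "'o \<Rightarrow> real" and r :: "'i \<Rightarrow> real"
  assumes fin: "finite Om" and Pnn: "\<forall>\<omega>\<in>Om. P \<omega> \<ge> 0" and rnn: "\<forall>\<omega>\<in>Om. r (G \<omega>) \<ge> 0"
    and G: "\<forall>\<omega>\<in>Om. G \<omega> = g (B \<omega>)"
  shows "ent Om (\<lambda>\<omega>. r (G \<omega>) * P \<omega>) B =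
    - (\<Sum>b\<in>B ` Om. r (g b) * (marg Om P B b * log 2 (marg Om P B b)))
    - (\<Sum>\<omega>\<in>Om. P \<omega> * (r (G \<omega>) * log 2 (r (G \<omega>))))"
proof -
  have m': "marg Om (\<lambda>\<omega>. r (G \<omega>) * P \<omega>) B b = r (g b) * marg Om P B b" for b
    unfolding marg_def sum_distrib_left by (rule sum.cong) (use G in auto)
  have "ent Om (\<lambda>\<omega>. r (G \<omega>) * P \<omega>) B =
     - (\<Sum>b\<in>B ` Om. r (g b) * (marg Om P B b * log 2 (marg Om P B b)) + marg Om P B b * (r (g b) * log 2 (r (g b))))"
    unfolding ent_def m'
  proof (rule arg_cong[where f=uminus], rule sum.cong[OF refl])
    fix b assume "b \<in> B ` Om"
    then obtain \<omega> where "\<omega> \<in> Om" "b = B \<omega>" by auto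
    then have "r (g b) \<ge> 0" using rnn G by auto
    moreover have "marg Om P B b \<ge> 0" by (rule marg_nonneg) (use Pnn in auto)
    ultimately show "r (g b) * marg Om P B b * log 2 (r (g b) * marg Om P B b) =
      r (g b) * (marg Om P B b * log 2 (marg Om P B b)) + marg Om P B b * (r (g b) * log 2 (r (g b)))"
      by (rule xlogx_mult)
  qed
  also have "\<dots> = - (\<Sum>b\<in>B ` Om. r (g b) * (marg Om P B b * log 2 (marg Om P B b)))
      - (\<Sum>b\<in>B ` Om. marg Om P B b * (r (g b) * log 2 (r (g b))))"
    by (simp only: sum.distrib minus_add)
  also have "(\<Sum>b\<in>B ` Om. marg Om P B b * (r (g b) * log 2 (r (g b)))) =
      (\<Sum>\<omega>\<in>Om. P \<omega> * (r (g (B \<omega>)) * log 2 (r (g (B \<omega>)))))"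
    by (rule marg_sum[OF fin])
  also have "\<dots> = (\<Sum>\<omega>\<in>Om. P \<omega> * (r (G \<omega>) * log 2 (r (G \<omega>))))"
    by (rule sum.cong) (use G in auto)
  finally show ?thesis .
qed

lemma lin_regroup:
  fixes r :: "'i \<Rightarrow> real"
  assumes "finite I" "finite Bs" "g ` Bs \<subseteq> I"
  shows "(\<Sum>b\<in>Bs. r (g b) * \<phi> b) = (\<Sum>i\<in>I. r i * (\<Sum>b\<in>Bs. if g b = i then \<phi> b else 0))"
proof -
  have "(\<Sum>i\<in>I. r i * (\<Sum>b\<in>Bs. if g b = i then \<phi> b else 0)) =
        (\<Sum>b\<in>Bs. \<Sum>i\<in>I. if g b = i then r i * \<phi> b else 0)"
  proof -
    have "(\<Sum>i\<in>I. r i * (\<Sum>b\<in>Bs. if g b = i then \<phi> b else 0)) =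
          (\<Sum>i\<in>I. \<Sum>b\<in>Bs. if g b = i then r i * \<phi> b else 0)"
      unfolding sum_distrib_left by (intro sum.cong refl) auto
    also have "\<dots> = (\<Sum>b\<in>Bs. \<Sum>i\<in>I. if g b = i then r i * \<phi> b else 0)"
      by (rule sum.swap)
    finally show ?thesis .
  qed
  also have "\<dots> = (\<Sum>b\<in>Bs. r (g b) * \<phi> b)"
    using assms by (intro sum.cong refl) (auto simp: sum.delta)
  finally show ?thesis ..
qed

lemma ent_lin:
  fixes P :: "'o \<Rightarrow> real" and I :: "'i set" and G :: "'o \<Rightarrow> 'i"
  assumes fin: "finite Om" "finite I" and GI: "G ` Om \<subseteq> I" and Pnn: "\<forall>\<omega>\<in>Om. P \<omega> \<ge> 0"
    and G: "\<forall>\<omega>\<in>Om. G \<omega> = g (B \<omega>)"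
  shows "\<exists>\<gamma>. \<forall>r. (\<forall>i\<in>I. r i \<ge> 0) \<longrightarrow> ent Om (\<lambda>\<omega>. r (G \<omega>) * P \<omega>) B =
      (\<Sum>i\<in>I. r i * \<gamma> i) - (\<Sum>\<omega>\<in>Om. P \<omega> * (r (G \<omega>) * log 2 (r (G \<omega>))))"
proof (intro exI allI impI)
  fix r :: "'i \<Rightarrow> real" assume rnn: "\<forall>i\<in>I. r i \<ge> 0"
  have gB: "g ` B ` Om \<subseteq> I" using GI G by force
  have rG: "\<forall>\<omega>\<in>Om. r (G \<omega>) \<ge> 0" using rnn GI by auto
  show "ent Om (\<lambda>\<omega>. r (G \<omega>) * P \<omega>) B =
      (\<Sum>i\<in>I. r i * (\<lambda>i. - (\<Sum>b\<in>B ` Om. if g b = i then marg Om P B b * log 2 (marg Om P B b) else 0)) i)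
      - (\<Sum>\<omega>\<in>Om. P \<omega> * (r (G \<omega>) * log 2 (r (G \<omega>))))"
  proof -
    have e1: "ent Om (\<lambda>\<omega>. r (G \<omega>) * P \<omega>) B =
      - (\<Sum>b\<in>B ` Om. r (g b) * (marg Om P B b * log 2 (marg Om P B b)))
      - (\<Sum>\<omega>\<in>Om. P \<omega> * (r (G \<omega>) * log 2 (r (G \<omega>))))"
      by (rule ent_reweight[where g=g and B=B and G=G and r=r, OF fin(1) Pnn rG G])
    have e2: "(\<Sum>b\<in>B ` Om. r (g b) * (marg Om P B b * log 2 (marg Om P B b))) =
       (\<Sum>i\<in>I. r i * (\<Sum>b\<in>B ` Om. if g b = i then marg Om P B b * log 2 (marg Om P B b) else 0))"
      by (rule lin_regroup[OF fin(2) _ gB]) (use fin(1) in simp)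
    have e3: "(\<Sum>i\<in>I. r i * (\<lambda>i. - (\<Sum>b\<in>B ` Om. if g b = i then marg Om P B b * log 2 (marg Om P B b) else 0)) i)
       = - (\<Sum>i\<in>I. r i * (\<Sum>b\<in>B ` Om. if g b = i then marg Om P B b * log 2 (marg Om P B b) else 0))"
      by (simp only: mult_minus_right sum_negf)
    show ?thesis unfolding e1 e2 e3 ..
  qed
qed

lemma cmi_lin1:
  fixes P :: "'o \<Rightarrow> real" and I :: "'i set" and G :: "'o \<Rightarrow> 'i"
  assumes fin: "finite Om" "finite I" and GI: "G ` Om \<subseteq> I" and Pnn: "\<forall>\<omega>\<in>Om. P \<omega> \<ge> 0"
    and G: "\<forall>\<omega>\<in>Om. G \<omega> = g (C \<omega>)"
  shows "\<exists>\<gamma>. \<forall>r. (\<forall>i\<in>I. r i \<ge> 0) \<longrightarrow> cmi Om (\<lambda>\<omega>. r (G \<omega>) * P \<omega>) A B C = (\<Sum>i\<in>I. r i * \<gamma> i)"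
proof -
  obtain g1 where 1: "\<forall>r. (\<forall>i\<in>I. r i \<ge> 0) \<longrightarrow> ent Om (\<lambda>\<omega>. r (G \<omega>) * P \<omega>) (\<lambda>\<omega>. (A \<omega>, C \<omega>)) =
      (\<Sum>i\<in>I. r i * g1 i) - (\<Sum>\<omega>\<in>Om. P \<omega> * (r (G \<omega>) * log 2 (r (G \<omega>))))"
    proof -
      have "\<forall>\<omega>\<in>Om. G \<omega> = (\<lambda>p. g (snd p)) ((\<lambda>\<omega>. (A \<omega>, C \<omega>)) \<omega>)" using G by simp
      from ent_lin[where g="\<lambda>p. g (snd p)" and B="\<lambda>\<omega>. (A \<omega>, C \<omega>)", OF fin GI Pnn this] show ?thesis by (elim exE) (rule that, assumption)
    qed
  obtain g2 where 2: "\<forall>r. (\<forall>i\<in>I. r i \<ge> 0) \<longrightarrow> ent Om (\<lambda>\<omega>. r (G \<omega>) * P \<omega>) (\<lambda>\<omega>. (B \<omega>, C \<omega>)) =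
      (\<Sum>i\<in>I. r i * g2 i) - (\<Sum>\<omega>\<in>Om. P \<omega> * (r (G \<omega>) * log 2 (r (G \<omega>))))"
    proof -
      have "\<forall>\<omega>\<in>Om. G \<omega> = (\<lambda>p. g (snd p)) ((\<lambda>\<omega>. (B \<omega>, C \<omega>)) \<omega>)" using G by simp
      from ent_lin[where g="\<lambda>p. g (snd p)" and B="\<lambda>\<omega>. (B \<omega>, C \<omega>)", OF fin GI Pnn this] show ?thesis by (elim exE) (rule that, assumption)
    qed
  obtain g3 where 3: "\<forall>r. (\<forall>i\<in>I. r i \<ge> 0) \<longrightarrow> ent Om (\<lambda>\<omega>. r (G \<omega>) * P \<omega>) (\<lambda>\<omega>. (A \<omega>, B \<omega>, C \<omega>)) =
      (\<Sum>i\<in>I. r i * g3 i) - (\<Sum>\<omega>\<in>Om. P \<omega> * (r (G \<omega>) * log 2 (r (G \<omega>))))"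
    proof -
      have "\<forall>\<omega>\<in>Om. G \<omega> = (\<lambda>p. g (snd (snd p))) ((\<lambda>\<omega>. (A \<omega>, B \<omega>, C \<omega>)) \<omega>)" using G by simp
      from ent_lin[where g="\<lambda>p. g (snd (snd p))" and B="\<lambda>\<omega>. (A \<omega>, B \<omega>, C \<omega>)", OF fin GI Pnn this] show ?thesis by (elim exE) (rule that, assumption)
    qed
  obtain g4 where 4: "\<forall>r. (\<forall>i\<in>I. r i \<ge> 0) \<longrightarrow> ent Om (\<lambda>\<omega>. r (G \<omega>) * P \<omega>) C =
      (\<Sum>i\<in>I. r i * g4 i) - (\<Sum>\<omega>\<in>Om. P \<omega> * (r (G \<omega>) * log 2 (r (G \<omega>))))"
    using ent_lin[where g=g and B=C, OF fin GI Pnn G] by (elim exE) (rule that, assumption)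
  show ?thesis
  proof (intro exI allI impI)
    fix r :: "'i \<Rightarrow> real" assume rnn: "\<forall>i\<in>I. r i \<ge> 0"
    have "cmi Om (\<lambda>\<omega>. r (G \<omega>) * P \<omega>) A B C = (\<Sum>i\<in>I. r i * g1 i) + (\<Sum>i\<in>I. r i * g2 i)
       - (\<Sum>i\<in>I. r i * g3 i) - (\<Sum>i\<in>I. r i * g4 i)"
      unfolding cmi_def mp[OF spec[OF 1, of r] rnn] mp[OF spec[OF 2, of r] rnn] mp[OF spec[OF 3, of r] rnn] mp[OF spec[OF 4, of r] rnn]
      by simp
    also have "\<dots> = (\<Sum>i\<in>I. r i * (g1 i + g2 i - g3 i - g4 i))"
      by (simp add: distrib_left right_diff_distrib sum.distrib sum_subtractf)
    finally show "cmi Om (\<lambda>\<omega>. r (G \<omega>) * P \<omega>) A B C = (\<Sum>i\<in>I. r i * (g1 i + g2 i - g3 i - g4 i))" .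
  qed
qed

lemma cmi_lin2:
  fixes P :: "'o \<Rightarrow> real" and I :: "'i set" and G :: "'o \<Rightarrow> 'i"
  assumes fin: "finite Om" "finite I" and GI: "G ` Om \<subseteq> I" and Pnn: "\<forall>\<omega>\<in>Om. P \<omega> \<ge> 0"
    and G: "\<forall>\<omega>\<in>Om. G \<omega> = g (B \<omega>)"
  shows "\<exists>\<gamma>. \<forall>r. (\<forall>i\<in>I. r i \<ge> 0) \<longrightarrow> cmi Om (\<lambda>\<omega>. r (G \<omega>) * P \<omega>) A B C =
     ent Om (\<lambda>\<omega>. r (G \<omega>) * P \<omega>) (\<lambda>\<omega>. (A \<omega>, C \<omega>)) - ent Om (\<lambda>\<omega>. r (G \<omega>) * P \<omega>) C + (\<Sum>i\<in>I. r i * \<gamma> i)"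
proof -
  obtain g2 where 2: "\<forall>r. (\<forall>i\<in>I. r i \<ge> 0) \<longrightarrow> ent Om (\<lambda>\<omega>. r (G \<omega>) * P \<omega>) (\<lambda>\<omega>. (B \<omega>, C \<omega>)) =
      (\<Sum>i\<in>I. r i * g2 i) - (\<Sum>\<omega>\<in>Om. P \<omega> * (r (G \<omega>) * log 2 (r (G \<omega>))))"
    proof -
      have "\<forall>\<omega>\<in>Om. G \<omega> = (\<lambda>p. g (fst p)) ((\<lambda>\<omega>. (B \<omega>, C \<omega>)) \<omega>)" using G by simp
      from ent_lin[where g="\<lambda>p. g (fst p)" and B="\<lambda>\<omega>. (B \<omega>, C \<omega>)", OF fin GI Pnn this] show ?thesis by (elim exE) (rule that, assumption)
    qed
  obtain g3 where 3: "\<forall>r. (\<forall>i\<in>I. r i \<ge> 0) \<longrightarrow> ent Om (\<lambda>\<omega>. r (G \<omega>) * P \<omega>) (\<lambda>\<omega>. (A \<omega>, B \<omega>, C \<omega>)) =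
      (\<Sum>i\<in>I. r i * g3 i) - (\<Sum>\<omega>\<in>Om. P \<omega> * (r (G \<omega>) * log 2 (r (G \<omega>))))"
    proof -
      have "\<forall>\<omega>\<in>Om. G \<omega> = (\<lambda>p. g (fst (snd p))) ((\<lambda>\<omega>. (A \<omega>, B \<omega>, C \<omega>)) \<omega>)" using G by simp
      from ent_lin[where g="\<lambda>p. g (fst (snd p))" and B="\<lambda>\<omega>. (A \<omega>, B \<omega>, C \<omega>)", OF fin GI Pnn this] show ?thesis by (elim exE) (rule that, assumption)
    qed
  show ?thesis
  proof (intro exI allI impI)
    fix r :: "'i \<Rightarrow> real" assume rnn: "\<forall>i\<in>I. r i \<ge> 0"
    have "cmi Om (\<lambda>\<omega>. r (G \<omega>) * P \<omega>) A B C = ent Om (\<lambda>\<omega>. r (G \<omega>) * P \<omega>) (\<lambda>\<omega>. (A \<omega>, C \<omega>))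
       - ent Om (\<lambda>\<omega>. r (G \<omega>) * P \<omega>) C + ((\<Sum>i\<in>I. r i * g2 i) - (\<Sum>i\<in>I. r i * g3 i))"
      unfolding cmi_def mp[OF spec[OF 2, of r] rnn] mp[OF spec[OF 3, of r] rnn] by simp
    also have "(\<Sum>i\<in>I. r i * g2 i) - (\<Sum>i\<in>I. r i * g3 i) = (\<Sum>i\<in>I. r i * (g2 i - g3 i))"
      by (simp add: right_diff_distrib sum_subtractf)
    finally show "cmi Om (\<lambda>\<omega>. r (G \<omega>) * P \<omega>) A B C = ent Om (\<lambda>\<omega>. r (G \<omega>) * P \<omega>) (\<lambda>\<omega>. (A \<omega>, C \<omega>))
       - ent Om (\<lambda>\<omega>. r (G \<omega>) * P \<omega>) C + (\<Sum>i\<in>I. r i * (g2 i - g3 i))" .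
  qed
qed

lemma sum_lin:
  fixes P F :: "'o \<Rightarrow> real" and I :: "'i set" and G :: "'o \<Rightarrow> 'i"
  assumes fin: "finite Om" "finite I" and GI: "G ` Om \<subseteq> I"
  shows "\<exists>\<gamma>. \<forall>r. (\<Sum>\<omega>\<in>Om. (r (G \<omega>) * P \<omega>) * F \<omega>) = (\<Sum>i\<in>I. r i * \<gamma> i)"
proof (intro exI allI)
  fix r :: "'i \<Rightarrow> real"
  show "(\<Sum>\<omega>\<in>Om. (r (G \<omega>) * P \<omega>) * F \<omega>) =
      (\<Sum>i\<in>I. r i * (\<lambda>i. \<Sum>\<omega>\<in>Om. if G \<omega> = i then P \<omega> * F \<omega> else 0) i)"
    using lin_regroup[OF fin(2) fin(1) GI, of r "\<lambda>\<omega>. P \<omega> * F \<omega>"] by (simp add: mult.assoc)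
qed


definition vX :: "'x \<times> 'y \<times> 'z \<times> nat \<times> nat \<times> nat \<Rightarrow> 'x" where "vX = (\<lambda>(x,y,z,u,v,w). x)"
definition vY :: "'x \<times> 'y \<times> 'z \<times> nat \<times> nat \<times> nat \<Rightarrow> 'y" where "vY = (\<lambda>(x,y,z,u,v,w). y)"
definition vZ :: "'x \<times> 'y \<times> 'z \<times> nat \<times> nat \<times> nat \<Rightarrow> 'z" where "vZ = (\<lambda>(x,y,z,u,v,w). z)"
definition vU :: "'x \<times> 'y \<times> 'z \<times> nat \<times> nat \<times> nat \<Rightarrow> nat" where "vU = (\<lambda>(x,y,z,u,v,w). u)"
definition vV :: "'x \<times> 'y \<times> 'z \<times> nat \<times> nat \<times> nat \<Rightarrow> nat" where "vV = (\<lambda>(x,y,z,u,v,w). v)"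
definition vW :: "'x \<times> 'y \<times> 'z \<times> nat \<times> nat \<times> nat \<Rightarrow> nat" where "vW = (\<lambda>(x,y,z,u,v,w). w)"

lemma v_simps[simp]: "vX (x,y,z,u,v,w) = x" "vY (x,y,z,u,v,w) = y" "vZ (x,y,z,u,v,w) = z"
  "vU (x,y,z,u,v,w) = u" "vV (x,y,z,u,v,w) = v" "vW (x,y,z,u,v,w) = w"
  by (simp_all add: vX_def vY_def vZ_def vU_def vV_def vW_def)

definition validU :: "nat \<Rightarrow> ('y \<Rightarrow> nat \<Rightarrow> real) \<Rightarrow> bool" where
  "validU nu pu \<longleftrightarrow> (\<forall>y u. 0 \<le> pu y u) \<and> (\<forall>y. (\<Sum>u<nu. pu y u) = 1)"
definition validV :: "nat \<Rightarrow> nat \<Rightarrow> (nat \<Rightarrow> 'z \<Rightarrow> nat \<Rightarrow> real) \<Rightarrow> bool" where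
  "validV nu nv pv \<longleftrightarrow> (\<forall>u z v. 0 \<le> pv u z v) \<and> (\<forall>u<nu. \<forall>z. (\<Sum>v<nv. pv u z v) = 1)"
definition validW :: "nat \<Rightarrow> nat \<Rightarrow> nat \<Rightarrow> (nat \<Rightarrow> nat \<Rightarrow> 'x \<Rightarrow> nat \<Rightarrow> real) \<Rightarrow> bool" where
  "validW nu nv nw pw \<longleftrightarrow> (\<forall>u v x w. 0 \<le> pw u v x w) \<and> (\<forall>u<nu. \<forall>v<nv. \<forall>x. (\<Sum>w<nw. pw u v x w) = 1)"

lemma outcomes_eq: "outcomes nu nv nw = UNIV \<times> UNIV \<times> UNIV \<times> {..<nu} \<times> {..<nv} \<times> {..<nw}"
  unfolding outcomes_def by auto

lemma finite_outcomes[simp]: "finite (outcomes nu nv nw :: ('x::finite \<times> 'y::finite \<times> 'z::finite \<times> nat \<times> nat \<times> nat) set)"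
  unfolding outcomes_eq by simp

lemma outcomes_mem[simp]: "((x,y,z,u,v,w) \<in> outcomes nu nv nw) \<longleftrightarrow> u < nu \<and> v < nv \<and> w < nw"
  unfolding outcomes_def by simp

lemma sum_outcomes:
  "(\<Sum>\<omega>\<in>outcomes nu nv nw. F \<omega>) =
   (\<Sum>x\<in>UNIV. \<Sum>y\<in>UNIV. \<Sum>z\<in>UNIV. \<Sum>u<nu. \<Sum>v<nv. \<Sum>w<nw. F (x,y,z,u,v,w))"
  unfolding outcomes_eq by (simp add: sum.cartesian_product split_def)

lemma joint_simp[simp]: "joint pxy pzx pu pv pw (x,y,z,u,v,w) = pxy x y * pzx x z * pu y u * pv u z v * pw u v x w"
  unfolding joint_def by simp

lemma sum_joint_w:
  fixes F :: "'x::finite \<times> 'y::finite \<times> 'z::finite \<times> nat \<times> nat \<times> nat \<Rightarrow> real"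
  assumes W: "validW nu nv nw pw" and F: "\<And>x y z u v w. F (x,y,z,u,v,w) = F (x,y,z,u,v,0)"
  shows "(\<Sum>\<omega>\<in>outcomes nu nv nw. joint pxy pzx pu pv pw \<omega> * F \<omega>) =
    (\<Sum>x\<in>UNIV. \<Sum>y\<in>UNIV. \<Sum>z\<in>UNIV. \<Sum>u<nu. \<Sum>v<nv. pxy x y * pzx x z * pu y u * pv u z v * F (x,y,z,u,v,0))"
  unfolding sum_outcomes
proof (intro sum.cong refl)
  fix x y z u v assume "u \<in> {..<nu}" "v \<in> {..<nv}"
  then have "(\<Sum>w<nw. pw u v x w) = 1" using W by (auto simp: validW_def)
  then show "(\<Sum>w<nw. joint pxy pzx pu pv pw (x, y, z, u, v, w) * F (x, y, z, u, v, w)) =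
         pxy x y * pzx x z * pu y u * pv u z v * F (x, y, z, u, v, 0)"
  proof -
    have "(\<Sum>w<nw. joint pxy pzx pu pv pw (x, y, z, u, v, w) * F (x, y, z, u, v, w)) =
      (\<Sum>w<nw. (pxy x y * pzx x z * pu y u * pv u z v * F (x, y, z, u, v, 0)) * pw u v x w)"
    proof (intro sum.cong refl)
      fix w show "joint pxy pzx pu pv pw (x, y, z, u, v, w) * F (x, y, z, u, v, w) =
         pxy x y * pzx x z * pu y u * pv u z v * F (x, y, z, u, v, 0) * pw u v x w"
        unfolding F[of x y z u v w] joint_simp by (simp only: mult_ac)
    qed
    also have "\<dots> = (pxy x y * pzx x z * pu y u * pv u z v * F (x, y, z, u, v, 0)) * (\<Sum>w<nw. pw u v x w)"
      by (simp only: sum_distrib_left)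
    finally show ?thesis using \<open>(\<Sum>w<nw. pw u v x w) = 1\<close> by simp
  qed
qed

lemma sum_joint_v:
  fixes F :: "'x::finite \<times> 'y::finite \<times> 'z::finite \<times> nat \<times> nat \<times> nat \<Rightarrow> real"
  assumes V: "validV nu nv pv" and W: "validW nu nv nw pw"
    and F: "\<And>x y z u v w. F (x,y,z,u,v,w) = F (x,y,z,u,0,0)"
  shows "(\<Sum>\<omega>\<in>outcomes nu nv nw. joint pxy pzx pu pv pw \<omega> * F \<omega>) =
    (\<Sum>x\<in>UNIV. \<Sum>y\<in>UNIV. \<Sum>z\<in>UNIV. \<Sum>u<nu. pxy x y * pzx x z * pu y u * F (x,y,z,u,0,0))"
  unfolding sum_joint_w[OF W, of F, OF trans[OF F F[symmetric]]]
proof (intro sum.cong refl)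
  fix x y z u assume "u \<in> {..<nu}"
  then have "(\<Sum>v<nv. pv u z v) = 1" using V by (auto simp: validV_def)
  then show "(\<Sum>v<nv. pxy x y * pzx x z * pu y u * pv u z v * F (x, y, z, u, v, 0)) =
         pxy x y * pzx x z * pu y u * F (x, y, z, u, 0, 0)"
  proof -
    have "(\<Sum>v<nv. pxy x y * pzx x z * pu y u * pv u z v * F (x, y, z, u, v, 0)) =
      (\<Sum>v<nv. (pxy x y * pzx x z * pu y u * F (x, y, z, u, 0, 0)) * pv u z v)"
    proof (intro sum.cong refl)
      fix v show "pxy x y * pzx x z * pu y u * pv u z v * F (x, y, z, u, v, 0) =
         pxy x y * pzx x z * pu y u * F (x, y, z, u, 0, 0) * pv u z v"
        unfolding F[of x y z u v 0] by (simp only: mult_ac)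
    qed
    also have "\<dots> = (pxy x y * pzx x z * pu y u * F (x, y, z, u, 0, 0)) * (\<Sum>v<nv. pv u z v)"
      by (simp only: sum_distrib_left)
    finally show ?thesis using \<open>(\<Sum>v<nv. pv u z v) = 1\<close> by simp
  qed
qed

lemma sum_joint_u:
  fixes F :: "'x::finite \<times> 'y::finite \<times> 'z::finite \<times> nat \<times> nat \<times> nat \<Rightarrow> real"
  assumes U: "validU nu pu" and V: "validV nu nv pv" and W: "validW nu nv nw pw"
    and F: "\<And>x y z u v w. F (x,y,z,u,v,w) = F (x,y,z,0,0,0)"
  shows "(\<Sum>\<omega>\<in>outcomes nu nv nw. joint pxy pzx pu pv pw \<omega> * F \<omega>) =
    (\<Sum>x\<in>UNIV. \<Sum>y\<in>UNIV. \<Sum>z\<in>UNIV. pxy x y * pzx x z * F (x,y,z,0,0,0))"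
  unfolding sum_joint_v[OF V W, of F, OF trans[OF F F[symmetric]]]
proof (intro sum.cong refl)
  fix x y z
  have "(\<Sum>u<nu. pu y u) = 1" using U by (auto simp: validU_def)
  then show "(\<Sum>u<nu. pxy x y * pzx x z * pu y u * F (x, y, z, u, 0, 0)) = pxy x y * pzx x z * F (x, y, z, 0, 0, 0)"
  proof -
    have "(\<Sum>u<nu. pxy x y * pzx x z * pu y u * F (x, y, z, u, 0, 0)) =
      (\<Sum>u<nu. (pxy x y * pzx x z * F (x, y, z, 0, 0, 0)) * pu y u)"
    proof (intro sum.cong refl)
      fix u show "pxy x y * pzx x z * pu y u * F (x, y, z, u, 0, 0) =
         pxy x y * pzx x z * F (x, y, z, 0, 0, 0) * pu y u"
        unfolding F[of x y z u 0 0] by (simp only: mult_ac)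
    qed
    also have "\<dots> = (pxy x y * pzx x z * F (x, y, z, 0, 0, 0)) * (\<Sum>u<nu. pu y u)"
      by (simp only: sum_distrib_left)
    finally show ?thesis using \<open>(\<Sum>u<nu. pu y u) = 1\<close> by simp
  qed
qed

lemma marg_as_sum: "finite Om \<Longrightarrow> marg Om P A a = (\<Sum>\<omega>\<in>Om. P \<omega> * (if A \<omega> = a then 1 else 0))"
  unfolding marg_def by (simp add: sum.inter_filter[symmetric] if_distrib cong: if_cong)

lemma marg_joint_w:
  fixes A :: "'x::finite \<times> 'y::finite \<times> 'z::finite \<times> nat \<times> nat \<times> nat \<Rightarrow> 'a"
  assumes "validW nu nv nw pw" "validW nu nv nw pw'" "\<And>x y z u v w. A (x,y,z,u,v,w) = A (x,y,z,u,v,0)"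
  shows "marg (outcomes nu nv nw) (joint pxy pzx pu pv pw) A a = marg (outcomes nu nv nw) (joint pxy pzx pu pv pw') A a"
proof -
  have F: "(if A (x,y,z,u,v,w) = a then 1 else 0) = (if A (x,y,z,u,v,0) = a then (1::real) else 0)" for x y z u v w
    by (simp only: assms(3)[of x y z u v w])
  show ?thesis unfolding marg_as_sum[OF finite_outcomes] sum_joint_w[where F="\<lambda>\<omega>. if A \<omega> = a then 1 else 0", OF assms(1) F] sum_joint_w[where F="\<lambda>\<omega>. if A \<omega> = a then 1 else 0", OF assms(2) F] ..
qed

lemma marg_joint_v:
  fixes A :: "'x::finite \<times> 'y::finite \<times> 'z::finite \<times> nat \<times> nat \<times> nat \<Rightarrow> 'a"
  assumes "validV nu nv pv" "validV nu nv pv'" "validW nu nv nw pw" "validW nu nv nw pw'"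
    "\<And>x y z u v w. A (x,y,z,u,v,w) = A (x,y,z,u,0,0)"
  shows "marg (outcomes nu nv nw) (joint pxy pzx pu pv pw) A a = marg (outcomes nu nv nw) (joint pxy pzx pu pv' pw') A a"
proof -
  have F: "(if A (x,y,z,u,v,w) = a then 1 else 0) = (if A (x,y,z,u,0,0) = a then (1::real) else 0)" for x y z u v w
    by (simp only: assms(5)[of x y z u v w])
  show ?thesis unfolding marg_as_sum[OF finite_outcomes] sum_joint_v[where F="\<lambda>\<omega>. if A \<omega> = a then 1 else 0", OF assms(1,3) F] sum_joint_v[where F="\<lambda>\<omega>. if A \<omega> = a then 1 else 0", OF assms(2,4) F] ..
qed

lemma marg_joint_u:
  fixes A :: "'x::finite \<times> 'y::finite \<times> 'z::finite \<times> nat \<times> nat \<times> nat \<Rightarrow> 'a"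
  assumes "validU nu pu" "validU nu pu'" "validV nu nv pv" "validV nu nv pv'" "validW nu nv nw pw" "validW nu nv nw pw'"
    "\<And>x y z u v w. A (x,y,z,u,v,w) = A (x,y,z,0,0,0)"
  shows "marg (outcomes nu nv nw) (joint pxy pzx pu pv pw) A a = marg (outcomes nu nv nw) (joint pxy pzx pu' pv' pw') A a"
proof -
  have F: "(if A (x,y,z,u,v,w) = a then 1 else 0) = (if A (x,y,z,0,0,0) = a then (1::real) else 0)" for x y z u v w
    by (simp only: assms(7)[of x y z u v w])
  show ?thesis unfolding marg_as_sum[OF finite_outcomes] sum_joint_u[where F="\<lambda>\<omega>. if A \<omega> = a then 1 else 0", OF assms(1,3,5) F] sum_joint_u[where F="\<lambda>\<omega>. if A \<omega> = a then 1 else 0", OF assms(2,4,6) F] ..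
qed

definition ok where
  "ok pxy pzx dx dz Dx Dz nu nv nw pu pv pw xhat zhat R1 R2 R3 \<longleftrightarrow>
    validU nu pu \<and> validV nu nv pv \<and> validW nu nv nw pw \<and>
    cmi (outcomes nu nv nw) (joint pxy pzx pu pv pw) vY vU vZ \<le> R1 \<and>
    cmi (outcomes nu nv nw) (joint pxy pzx pu pv pw) vZ vV (\<lambda>\<omega>. (vU \<omega>, vX \<omega>)) \<le> R2 \<and>
    cmi (outcomes nu nv nw) (joint pxy pzx pu pv pw) vX vW (\<lambda>\<omega>. (vU \<omega>, vV \<omega>, vZ \<omega>)) \<le> R3 \<and>
    (\<Sum>\<omega>\<in>outcomes nu nv nw. joint pxy pzx pu pv pw \<omega> * dx (vX \<omega>) (xhat (vU \<omega>) (vW \<omega>) (vZ \<omega>))) \<le> Dx \<and>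
    (\<Sum>\<omega>\<in>outcomes nu nv nw. joint pxy pzx pu pv pw \<omega> * dz (vZ \<omega>) (zhat (vU \<omega>) (vV \<omega>) (vX \<omega>))) \<le> Dz"

lemma region_bd_eq:
  "region_bd Bd pxy pzx dx dz Dx Dz = {(R1, R2, R3). \<exists>nu nv nw pu pv pw xhat zhat.
     Bd nu nv nw \<and> ok pxy pzx dx dz Dx Dz nu nv nw pu pv pw xhat zhat R1 R2 R3}"
  unfolding region_bd_def ok_def validU_def validV_def validW_def Let_def vX_def vY_def vZ_def vU_def vV_def vW_def
  by (simp only: conj_assoc)

lemma joint_nonneg:
  assumes "\<forall>x y. 0 \<le> pxy x y" "\<forall>x z. 0 \<le> pzx x z" "validU nu pu" "validV nu nv pv" "validW nu nv nw pw"
  shows "0 \<le> joint pxy pzx pu pv pw \<omega>"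
  using assms unfolding validU_def validV_def validW_def
  by (cases \<omega>) (auto intro!: mult_nonneg_nonneg)


lemma relabelU:
  fixes pxy :: "'x::finite \<Rightarrow> 'y::finite \<Rightarrow> real" and pzx :: "'x \<Rightarrow> 'z::finite \<Rightarrow> real"
  assumes okk: "ok pxy pzx dx dz Dx Dz nu nv nw pu pv pw xhat zhat R1 R2 R3"
    and e: "bij_betw e {..<n} T" and T: "T \<subseteq> {..<nu}"
    and zero: "\<And>y u. u < nu \<Longrightarrow> u \<notin> T \<Longrightarrow> pu y u = 0"
  shows "ok pxy pzx dx dz Dx Dz n nv nw (\<lambda>y k. pu y (e k)) (\<lambda>k. pv (e k)) (\<lambda>k. pw (e k))
           (\<lambda>k. xhat (e k)) (\<lambda>k. zhat (e k)) R1 R2 R3"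
proof -
  let ?Om = "outcomes nu nv nw :: ('x \<times> 'y \<times> 'z \<times> nat \<times> nat \<times> nat) set"
  let ?Om2 = "outcomes n nv nw :: ('x \<times> 'y \<times> 'z \<times> nat \<times> nat \<times> nat) set"
  let ?P = "joint pxy pzx pu pv pw"
  let ?P2 = "joint pxy pzx (\<lambda>y k. pu y (e k)) (\<lambda>k. pv (e k)) (\<lambda>k. pw (e k))"
  define h :: "'x \<times> 'y \<times> 'z \<times> nat \<times> nat \<times> nat \<Rightarrow> 'x \<times> 'y \<times> 'z \<times> nat \<times> nat \<times> nat"
    where "h = (\<lambda>(x,y,z,k,v,w). (x,y,z,e k,v,w))"
  define ei where "ei = the_inv_into {..<n} e"
  have einj: "inj_on e {..<n}" and eT: "e ` {..<n} = T" using e by (auto simp: bij_betw_def)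
  have eik: "ei (e k) = k" if "k < n" for k using the_inv_into_f_f[OF einj] that by (simp add: ei_def)
  have eiinj: "inj_on ei T" unfolding ei_def eT[symmetric] by (rule inj_on_the_inv_into[OF einj])
  have h_simp: "h (x,y,z,k,v,w) = (x,y,z,e k,v,w)" for x y z k v w by (simp add: h_def)
  have eu: "\<And>k. k < n \<Longrightarrow> e k < nu" using eT T by auto
  have F1: "h ` ?Om2 \<subseteq> ?Om" using eu by (auto simp: h_def)
  have F2: "inj_on h ?Om2"
    unfolding inj_on_def h_def using einj by (auto simp: inj_on_def)
  have F3: "\<And>\<omega>. \<omega> \<in> ?Om2 \<Longrightarrow> ?P (h \<omega>) = ?P2 \<omega>" by (auto simp: h_def)
  have F4: "\<And>\<omega>. \<omega> \<in> ?Om - h ` ?Om2 \<Longrightarrow> ?P \<omega> = 0"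
  proof -
    fix \<omega> assume om: "\<omega> \<in> ?Om - h ` ?Om2"
    obtain x y z u v w where \<omega>: "\<omega> = (x,y,z,u,v,w)" by (cases \<omega>) auto
    have "u \<notin> T"
    proof
      assume "u \<in> T"
      then obtain k where "k < n" "u = e k" using eT by auto
      then have "\<omega> = h (x,y,z,k,v,w)" "(x,y,z,k,v,w) \<in> ?Om2" using om \<omega> by (auto simp: h_def)
      then show False using om by auto
    qed
    then show "?P \<omega> = 0" using zero om \<omega> by auto
  qed
  have UU: "\<And>\<omega>. \<omega> \<in> ?Om2 \<Longrightarrow> vU (h \<omega>) \<in> T" using eT by (auto simp: h_def)
  have imU: "vU ` h ` ?Om2 \<subseteq> T" using UU by auto
  have iU: "inj_on ei (vU ` h ` ?Om2)" by (rule inj_on_subset[OF eiinj imU])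
  have iU2: "inj_on ei (fst ` (\<lambda>\<omega>. (vU \<omega>, Q \<omega>)) ` h ` ?Om2)" for Q :: "_ \<Rightarrow> 'q"
    using iU by (simp add: image_image)
  note tr = cmi_transport[OF finite_outcomes finite_outcomes F1 F2, where Pb = ?P and Pa = ?P2, OF F3 F4]
  have c1: "cmi ?Om2 ?P2 vY vU vZ = cmi ?Om ?P vY vU vZ"
    by (rule tr[where fa=id and fb=ei and fc=id]) (insert iU, auto simp: h_def eik)
  have c2: "cmi ?Om2 ?P2 vZ vV (\<lambda>\<omega>. (vU \<omega>, vX \<omega>)) = cmi ?Om ?P vZ vV (\<lambda>\<omega>. (vU \<omega>, vX \<omega>))"
    by (rule tr[where fa=id and fb=id and fc="\<lambda>(a, c). (ei a, id c)"])
      (insert iU2[of vX] iU2[of "\<lambda>\<omega>. (vV \<omega>, vZ \<omega>)"], auto simp: h_def eik intro!: inj_on_pair)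
  have c3: "cmi ?Om2 ?P2 vX vW (\<lambda>\<omega>. (vU \<omega>, vV \<omega>, vZ \<omega>)) = cmi ?Om ?P vX vW (\<lambda>\<omega>. (vU \<omega>, vV \<omega>, vZ \<omega>))"
    by (rule tr[where fa=id and fb=id and fc="\<lambda>(a, c). (ei a, id c)"])
      (insert iU2[of vX] iU2[of "\<lambda>\<omega>. (vV \<omega>, vZ \<omega>)"], auto simp: h_def eik intro!: inj_on_pair)
  note st = sum_transport[OF finite_outcomes finite_outcomes F1 F2, where Pb = ?P and Pa = ?P2, OF F3 F4]
  have s1: "(\<Sum>\<omega>\<in>?Om2. ?P2 \<omega> * dx (vX \<omega>) ((\<lambda>k. xhat (e k)) (vU \<omega>) (vW \<omega>) (vZ \<omega>))) =
            (\<Sum>\<omega>\<in>?Om. ?P \<omega> * dx (vX \<omega>) (xhat (vU \<omega>) (vW \<omega>) (vZ \<omega>)))"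
    by (rule st) (auto simp: h_def)
  have s2: "(\<Sum>\<omega>\<in>?Om2. ?P2 \<omega> * dz (vZ \<omega>) ((\<lambda>k. zhat (e k)) (vU \<omega>) (vV \<omega>) (vX \<omega>))) =
            (\<Sum>\<omega>\<in>?Om. ?P \<omega> * dz (vZ \<omega>) (zhat (vU \<omega>) (vV \<omega>) (vX \<omega>)))"
    by (rule st) (auto simp: h_def)
  have vu: "validU n (\<lambda>y k. pu y (e k))"
  proof -
    have "(\<Sum>k<n. pu y (e k)) = 1" for y
    proof -
      have "(\<Sum>k<n. pu y (e k)) = (\<Sum>u\<in>T. pu y u)"
        using sum.reindex_bij_betw[OF e, of "pu y"] by simp
      also have "\<dots> = (\<Sum>u<nu. pu y u)"
        using T zero by (intro sum.mono_neutral_left) auto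
      also have "\<dots> = 1" using okk by (simp add: ok_def validU_def)
      finally show ?thesis .
    qed
    then show ?thesis using okk by (simp add: ok_def validU_def)
  qed
  have vv: "validV n nv (\<lambda>k. pv (e k))"
    using okk eu by (auto simp: ok_def validV_def)
  have vw: "validW n nv nw (\<lambda>k. pw (e k))"
    using okk eu by (auto simp: ok_def validW_def)
  show ?thesis
    using okk vu vv vw c1 c2 c3 s1 s2 unfolding ok_def by simp
qed


lemma relabelV:
  fixes pxy :: "'x::finite \<Rightarrow> 'y::finite \<Rightarrow> real" and pzx :: "'x \<Rightarrow> 'z::finite \<Rightarrow> real"
  assumes okk: "ok pxy pzx dx dz Dx Dz nu nv nw pu pv pw xhat zhat R1 R2 R3"
    and e: "bij_betw e {..<n} T" and T: "T \<subseteq> {..<nv}"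
    and zero: "\<And>u z v. u < nu \<Longrightarrow> v < nv \<Longrightarrow> v \<notin> T \<Longrightarrow> pv u z v = 0"
  shows "ok pxy pzx dx dz Dx Dz nu n nw pu (\<lambda>u z k. pv u z (e k)) (\<lambda>u k. pw u (e k))
           xhat (\<lambda>u k. zhat u (e k)) R1 R2 R3"
proof -
  let ?Om = "outcomes nu nv nw :: ('x \<times> 'y \<times> 'z \<times> nat \<times> nat \<times> nat) set"
  let ?Om2 = "outcomes nu n nw :: ('x \<times> 'y \<times> 'z \<times> nat \<times> nat \<times> nat) set"
  let ?P = "joint pxy pzx pu pv pw"
  let ?P2 = "joint pxy pzx pu (\<lambda>u z k. pv u z (e k)) (\<lambda>u k. pw u (e k))"
  define h :: "'x \<times> 'y \<times> 'z \<times> nat \<times> nat \<times> nat \<Rightarrow> 'x \<times> 'y \<times> 'z \<times> nat \<times> nat \<times> nat"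
    where "h = (\<lambda>(x,y,z,u,k,w). (x,y,z,u,e k,w))"
  define ei where "ei = the_inv_into {..<n} e"
  have einj: "inj_on e {..<n}" and eT: "e ` {..<n} = T" using e by (auto simp: bij_betw_def)
  have eik: "ei (e k) = k" if "k < n" for k using the_inv_into_f_f[OF einj] that by (simp add: ei_def)
  have eiinj: "inj_on ei T" unfolding ei_def eT[symmetric] by (rule inj_on_the_inv_into[OF einj])
  have eu: "\<And>k. k < n \<Longrightarrow> e k < nv" using eT T by auto
  have F1: "h ` ?Om2 \<subseteq> ?Om" using eu by (auto simp: h_def)
  have F2: "inj_on h ?Om2"
    unfolding inj_on_def h_def using einj by (auto simp: inj_on_def)
  have F3: "\<And>\<omega>. \<omega> \<in> ?Om2 \<Longrightarrow> ?P (h \<omega>) = ?P2 \<omega>" by (auto simp: h_def)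
  have F4: "\<And>\<omega>. \<omega> \<in> ?Om - h ` ?Om2 \<Longrightarrow> ?P \<omega> = 0"
  proof -
    fix \<omega> assume om: "\<omega> \<in> ?Om - h ` ?Om2"
    obtain x y z u v w where \<omega>: "\<omega> = (x,y,z,u,v,w)" by (cases \<omega>) auto
    have "v \<notin> T"
    proof
      assume "v \<in> T"
      then obtain k where "k < n" "v = e k" using eT by auto
      then have "\<omega> = h (x,y,z,u,k,w)" "(x,y,z,u,k,w) \<in> ?Om2" using om \<omega> by (auto simp: h_def)
      then show False using om by auto
    qed
    then show "?P \<omega> = 0" using zero om \<omega> by auto
  qed
  have imV: "vV ` h ` ?Om2 \<subseteq> T" using eT by (auto simp: h_def)
  have iV: "inj_on ei (vV ` h ` ?Om2)" by (rule inj_on_subset[OF eiinj imV])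
  have iV3: "inj_on ei (fst ` snd ` (\<lambda>\<omega>. (vU \<omega>, vV \<omega>, vZ \<omega>)) ` h ` ?Om2)"
    using iV by (simp add: image_image)
  note tr = cmi_transport[OF finite_outcomes finite_outcomes F1 F2, where Pb = ?P and Pa = ?P2, OF F3 F4]
  have c1: "cmi ?Om2 ?P2 vY vU vZ = cmi ?Om ?P vY vU vZ"
    by (rule tr[where fa=id and fb=id and fc=id]) (auto simp: h_def)
  have c2: "cmi ?Om2 ?P2 vZ vV (\<lambda>\<omega>. (vU \<omega>, vX \<omega>)) = cmi ?Om ?P vZ vV (\<lambda>\<omega>. (vU \<omega>, vX \<omega>))"
    by (rule tr[where fa=id and fb=ei and fc=id]) (insert iV, auto simp: h_def eik)
  have c3: "cmi ?Om2 ?P2 vX vW (\<lambda>\<omega>. (vU \<omega>, vV \<omega>, vZ \<omega>)) = cmi ?Om ?P vX vW (\<lambda>\<omega>. (vU \<omega>, vV \<omega>, vZ \<omega>))"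
    by (rule tr[where fa=id and fb=id and fc="\<lambda>(a, c). (id a, (\<lambda>(b, d). (ei b, id d)) c)"])
      (insert iV3, auto simp: h_def eik intro!: inj_on_pair)
  note st = sum_transport[OF finite_outcomes finite_outcomes F1 F2, where Pb = ?P and Pa = ?P2, OF F3 F4]
  have s1: "(\<Sum>\<omega>\<in>?Om2. ?P2 \<omega> * dx (vX \<omega>) (xhat (vU \<omega>) (vW \<omega>) (vZ \<omega>))) =
            (\<Sum>\<omega>\<in>?Om. ?P \<omega> * dx (vX \<omega>) (xhat (vU \<omega>) (vW \<omega>) (vZ \<omega>)))"
    by (rule st) (auto simp: h_def)
  have s2: "(\<Sum>\<omega>\<in>?Om2. ?P2 \<omega> * dz (vZ \<omega>) ((\<lambda>u k. zhat u (e k)) (vU \<omega>) (vV \<omega>) (vX \<omega>))) =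
            (\<Sum>\<omega>\<in>?Om. ?P \<omega> * dz (vZ \<omega>) (zhat (vU \<omega>) (vV \<omega>) (vX \<omega>)))"
    by (rule st) (auto simp: h_def)
  have vv: "validV nu n (\<lambda>u z k. pv u z (e k))"
  proof -
    have "(\<Sum>k<n. pv u z (e k)) = 1" if "u < nu" for u z
    proof -
      have "(\<Sum>k<n. pv u z (e k)) = (\<Sum>v\<in>T. pv u z v)"
        using sum.reindex_bij_betw[OF e, of "pv u z"] by simp
      also have "\<dots> = (\<Sum>v<nv. pv u z v)"
        using T zero that by (intro sum.mono_neutral_left) auto
      also have "\<dots> = 1" using okk that by (simp add: ok_def validV_def)
      finally show ?thesis .
    qed
    then show ?thesis using okk by (simp add: ok_def validV_def)
  qed
  have vw: "validW nu n nw (\<lambda>u k. pw u (e k))"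
    using okk eu by (auto simp: ok_def validW_def)
  show ?thesis
    using okk vv vw c1 c2 c3 s1 s2 unfolding ok_def by simp
qed

lemma relabelW:
  fixes pxy :: "'x::finite \<Rightarrow> 'y::finite \<Rightarrow> real" and pzx :: "'x \<Rightarrow> 'z::finite \<Rightarrow> real"
  assumes okk: "ok pxy pzx dx dz Dx Dz nu nv nw pu pv pw xhat zhat R1 R2 R3"
    and e: "bij_betw e {..<n} T" and T: "T \<subseteq> {..<nw}"
    and zero: "\<And>u v x w. u < nu \<Longrightarrow> v < nv \<Longrightarrow> w < nw \<Longrightarrow> w \<notin> T \<Longrightarrow> pw u v x w = 0"
  shows "ok pxy pzx dx dz Dx Dz nu nv n pu pv (\<lambda>u v x k. pw u v x (e k))
           (\<lambda>u k z. xhat u (e k) z) zhat R1 R2 R3"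
proof -
  let ?Om = "outcomes nu nv nw :: ('x \<times> 'y \<times> 'z \<times> nat \<times> nat \<times> nat) set"
  let ?Om2 = "outcomes nu nv n :: ('x \<times> 'y \<times> 'z \<times> nat \<times> nat \<times> nat) set"
  let ?P = "joint pxy pzx pu pv pw"
  let ?P2 = "joint pxy pzx pu pv (\<lambda>u v x k. pw u v x (e k))"
  define h :: "'x \<times> 'y \<times> 'z \<times> nat \<times> nat \<times> nat \<Rightarrow> 'x \<times> 'y \<times> 'z \<times> nat \<times> nat \<times> nat"
    where "h = (\<lambda>(x,y,z,u,v,k). (x,y,z,u,v,e k))"
  define ei where "ei = the_inv_into {..<n} e"
  have einj: "inj_on e {..<n}" and eT: "e ` {..<n} = T" using e by (auto simp: bij_betw_def)
  have eik: "ei (e k) = k" if "k < n" for k using the_inv_into_f_f[OF einj] that by (simp add: ei_def)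
  have eiinj: "inj_on ei T" unfolding ei_def eT[symmetric] by (rule inj_on_the_inv_into[OF einj])
  have eu: "\<And>k. k < n \<Longrightarrow> e k < nw" using eT T by auto
  have F1: "h ` ?Om2 \<subseteq> ?Om" using eu by (auto simp: h_def)
  have F2: "inj_on h ?Om2"
    unfolding inj_on_def h_def using einj by (auto simp: inj_on_def)
  have F3: "\<And>\<omega>. \<omega> \<in> ?Om2 \<Longrightarrow> ?P (h \<omega>) = ?P2 \<omega>" by (auto simp: h_def)
  have F4: "\<And>\<omega>. \<omega> \<in> ?Om - h ` ?Om2 \<Longrightarrow> ?P \<omega> = 0"
  proof -
    fix \<omega> assume om: "\<omega> \<in> ?Om - h ` ?Om2"
    obtain x y z u v w where \<omega>: "\<omega> = (x,y,z,u,v,w)" by (cases \<omega>) auto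
    have "w \<notin> T"
    proof
      assume "w \<in> T"
      then obtain k where "k < n" "w = e k" using eT by auto
      then have "\<omega> = h (x,y,z,u,v,k)" "(x,y,z,u,v,k) \<in> ?Om2" using om \<omega> by (auto simp: h_def)
      then show False using om by auto
    qed
    then show "?P \<omega> = 0" using zero om \<omega> by auto
  qed
  have imW: "vW ` h ` ?Om2 \<subseteq> T" using eT by (auto simp: h_def)
  have iW: "inj_on ei (vW ` h ` ?Om2)" by (rule inj_on_subset[OF eiinj imW])
  note tr = cmi_transport[OF finite_outcomes finite_outcomes F1 F2, where Pb = ?P and Pa = ?P2, OF F3 F4]
  have c1: "cmi ?Om2 ?P2 vY vU vZ = cmi ?Om ?P vY vU vZ"
    by (rule tr[where fa=id and fb=id and fc=id]) (auto simp: h_def)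
  have c2: "cmi ?Om2 ?P2 vZ vV (\<lambda>\<omega>. (vU \<omega>, vX \<omega>)) = cmi ?Om ?P vZ vV (\<lambda>\<omega>. (vU \<omega>, vX \<omega>))"
    by (rule tr[where fa=id and fb=id and fc=id]) (auto simp: h_def)
  have c3: "cmi ?Om2 ?P2 vX vW (\<lambda>\<omega>. (vU \<omega>, vV \<omega>, vZ \<omega>)) = cmi ?Om ?P vX vW (\<lambda>\<omega>. (vU \<omega>, vV \<omega>, vZ \<omega>))"
    by (rule tr[where fa=id and fb=ei and fc=id]) (insert iW, auto simp: h_def eik)
  note st = sum_transport[OF finite_outcomes finite_outcomes F1 F2, where Pb = ?P and Pa = ?P2, OF F3 F4]
  have s1: "(\<Sum>\<omega>\<in>?Om2. ?P2 \<omega> * dx (vX \<omega>) ((\<lambda>u k z. xhat u (e k) z) (vU \<omega>) (vW \<omega>) (vZ \<omega>))) =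
            (\<Sum>\<omega>\<in>?Om. ?P \<omega> * dx (vX \<omega>) (xhat (vU \<omega>) (vW \<omega>) (vZ \<omega>)))"
    by (rule st) (auto simp: h_def)
  have s2: "(\<Sum>\<omega>\<in>?Om2. ?P2 \<omega> * dz (vZ \<omega>) (zhat (vU \<omega>) (vV \<omega>) (vX \<omega>))) =
            (\<Sum>\<omega>\<in>?Om. ?P \<omega> * dz (vZ \<omega>) (zhat (vU \<omega>) (vV \<omega>) (vX \<omega>)))"
    by (rule st) (auto simp: h_def)
  have vw: "validW nu nv n (\<lambda>u v x k. pw u v x (e k))"
  proof -
    have "(\<Sum>k<n. pw u v x (e k)) = 1" if "u < nu" "v < nv" for u v x
    proof -
      have "(\<Sum>k<n. pw u v x (e k)) = (\<Sum>w\<in>T. pw u v x w)"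
        using sum.reindex_bij_betw[OF e, of "pw u v x"] by simp
      also have "\<dots> = (\<Sum>w<nw. pw u v x w)"
        using T zero that by (intro sum.mono_neutral_left) auto
      also have "\<dots> = 1" using okk that by (simp add: ok_def validW_def)
      finally show ?thesis .
    qed
    then show ?thesis using okk by (simp add: ok_def validW_def)
  qed
  show ?thesis
    using okk vw c1 c2 c3 s1 s2 unfolding ok_def by simp
qed


lemma reweightU:
  fixes pxy :: "'x::finite \<Rightarrow> 'y::finite \<Rightarrow> real" and pzx :: "'x \<Rightarrow> 'z::finite \<Rightarrow> real"
  assumes pxy: "\<forall>x y. 0 \<le> pxy x y" and pzx: "\<forall>x z. 0 \<le> pzx x z"
    and okk: "ok pxy pzx dx dz Dx Dz nu nv nw pu pv pw xhat zhat R1 R2 R3"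
  shows "\<exists>m. (\<forall>u. 0 \<le> m u) \<and> card {u\<in>{..<nu}. m u \<noteq> 0} \<le> CARD('y) + 4 \<and>
    ok pxy pzx dx dz Dx Dz nu nv nw (\<lambda>y u. m u * pu y u) pv pw xhat zhat R1 R2 R3"
proof -
  let ?Om = "outcomes nu nv nw :: ('x \<times> 'y \<times> 'z \<times> nat \<times> nat \<times> nat) set"
  let ?P = "joint pxy pzx pu pv pw"
  let ?I = "{..<nu}"
  have VU: "validU nu pu" and VV: "validV nu nv pv" and VW: "validW nu nv nw pw" using okk by (auto simp: ok_def)
  have Pnn: "\<forall>\<omega>\<in>?Om. 0 \<le> ?P \<omega>" using joint_nonneg[OF pxy pzx VU VV VW] by blast
  have GI: "vU ` ?Om \<subseteq> ?I" by (auto simp: outcomes_def)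
  have fin: "finite ?Om" "finite ?I" by auto
  have Pr: "joint pxy pzx (\<lambda>y u. r u * pu y u) pv pw = (\<lambda>\<omega>. r (vU \<omega>) * ?P \<omega>)" for r
    by (rule ext) (auto simp: mult_ac)
  have Gid: "\<forall>\<omega>\<in>?Om. vU \<omega> = id (vU \<omega>)" by simp
  have Gf2: "\<forall>\<omega>\<in>?Om. vU \<omega> = fst ((\<lambda>\<omega>. (vU \<omega>, vX \<omega>)) \<omega>)" by simp
  have Gf3: "\<forall>\<omega>\<in>?Om. vU \<omega> = fst ((\<lambda>\<omega>. (vU \<omega>, vV \<omega>, vZ \<omega>)) \<omega>)" by simp
  obtain g1 where g1: "\<forall>r. (\<forall>i\<in>?I. r i \<ge> 0) \<longrightarrow> cmi ?Om (\<lambda>\<omega>. r (vU \<omega>) * ?P \<omega>) vY vU vZ =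
     ent ?Om (\<lambda>\<omega>. r (vU \<omega>) * ?P \<omega>) (\<lambda>\<omega>. (vY \<omega>, vZ \<omega>)) - ent ?Om (\<lambda>\<omega>. r (vU \<omega>) * ?P \<omega>) vZ + (\<Sum>i\<in>?I. r i * g1 i)"
    using cmi_lin2[where g=id and A=vY and B=vU and C=vZ, OF fin GI Pnn Gid] by (elim exE) (rule that)
  obtain g2 where g2: "\<forall>r. (\<forall>i\<in>?I. r i \<ge> 0) \<longrightarrow> cmi ?Om (\<lambda>\<omega>. r (vU \<omega>) * ?P \<omega>) vZ vV (\<lambda>\<omega>. (vU \<omega>, vX \<omega>)) = (\<Sum>i\<in>?I. r i * g2 i)"
    using cmi_lin1[where g=fst and A=vZ and B=vV and C="\<lambda>\<omega>. (vU \<omega>, vX \<omega>)", OF fin GI Pnn Gf2] by (elim exE) (rule that)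
  obtain g3 where g3: "\<forall>r. (\<forall>i\<in>?I. r i \<ge> 0) \<longrightarrow> cmi ?Om (\<lambda>\<omega>. r (vU \<omega>) * ?P \<omega>) vX vW (\<lambda>\<omega>. (vU \<omega>, vV \<omega>, vZ \<omega>)) = (\<Sum>i\<in>?I. r i * g3 i)"
    using cmi_lin1[where g=fst and A=vX and B=vW and C="\<lambda>\<omega>. (vU \<omega>, vV \<omega>, vZ \<omega>)", OF fin GI Pnn Gf3] by (elim exE) (rule that)
  obtain g4 where g4: "\<forall>r. (\<Sum>\<omega>\<in>?Om. (r (vU \<omega>) * ?P \<omega>) * dx (vX \<omega>) (xhat (vU \<omega>) (vW \<omega>) (vZ \<omega>))) = (\<Sum>i\<in>?I. r i * g4 i)"
    using sum_lin[where P="?P" and F="\<lambda>\<omega>. dx (vX \<omega>) (xhat (vU \<omega>) (vW \<omega>) (vZ \<omega>))", OF fin GI] by (elim exE) (rule that)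
  obtain g5 where g5: "\<forall>r. (\<Sum>\<omega>\<in>?Om. (r (vU \<omega>) * ?P \<omega>) * dz (vZ \<omega>) (zhat (vU \<omega>) (vV \<omega>) (vX \<omega>))) = (\<Sum>i\<in>?I. r i * g5 i)"
    using sum_lin[where P="?P" and F="\<lambda>\<omega>. dz (vZ \<omega>) (zhat (vU \<omega>) (vV \<omega>) (vX \<omega>))", OF fin GI] by (elim exE) (rule that)
  define r0 where "r0 u = (if 0 < (\<Sum>y\<in>UNIV. pu y u) then 1 else (0::real))" for u
  have r0pu: "r0 u * pu y u = pu y u" for u y
  proof (cases "0 < (\<Sum>y\<in>UNIV. pu y u)")
    case True then show ?thesis by (simp add: r0_def)
  next
    case False
    have nn: "\<forall>y\<in>UNIV. 0 \<le> pu y u" using VU by (simp add: validU_def)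
    then have "(\<Sum>y\<in>UNIV. pu y u) = 0" using False sum_nonneg[of UNIV "\<lambda>y. pu y u"] by force
    then have "pu y u = 0" using sum_nonneg_eq_0_iff[of UNIV "\<lambda>y. pu y u"] nn by simp
    then show ?thesis by simp
  qed
  have P0: "(\<lambda>\<omega>. r0 (vU \<omega>) * ?P \<omega>) = ?P"
    unfolding Pr[of r0, symmetric] r0pu ..
  have P0': "r0 (vU \<omega>) * ?P \<omega> = ?P \<omega>" for \<omega> using fun_cong[OF P0, of \<omega>] by simp
  have r0nn: "\<forall>i\<in>?I. r0 i \<ge> 0" by (simp add: r0_def)
  define cc where "cc u k = (if k = 0 then g2 u else if k = (1::nat) then g3 u else if k = 2 then g4 u else g5 u)" for u k
  have pos: "\<forall>i\<in>?I. r0 i \<noteq> 0 \<longrightarrow> (\<Sum>j\<in>UNIV. pu j i) > 0" by (simp add: r0_def)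
  from support_reduce[of ?I "UNIV::'y set" "{..<4::nat}" r0 "\<lambda>i y. pu y i" cc g1, OF finite_lessThan finite_class.finite_UNIV finite_lessThan r0nn pos]
  obtain mu where mu: "\<forall>i\<in>?I. mu i \<ge> 0" "\<forall>i\<in>?I. mu i \<noteq> 0 \<longrightarrow> r0 i \<noteq> 0"
      "card {i\<in>?I. mu i \<noteq> 0} \<le> card (UNIV::'y set) + card {..<4::nat}"
      "\<forall>y\<in>UNIV. (\<Sum>i\<in>?I. mu i * pu y i) = (\<Sum>i\<in>?I. r0 i * pu y i)"
      "\<forall>k\<in>{..<4::nat}. (\<Sum>i\<in>?I. mu i * cc i k) = (\<Sum>i\<in>?I. r0 i * cc i k)"
      "(\<Sum>i\<in>?I. mu i * g1 i) \<le> (\<Sum>i\<in>?I. r0 i * g1 i)"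
    by (elim exE conjE) (rule that)
  define m where "m u = (if u < nu then mu u else 0)" for u
  have mnn: "\<forall>u. 0 \<le> m u" using mu(1) by (simp add: m_def)
  have msum: "(\<Sum>i\<in>?I. m i * f i) = (\<Sum>i\<in>?I. mu i * f i)" for f by (rule sum.cong) (auto simp: m_def)
  have mI: "\<forall>i\<in>?I. m i \<ge> 0" using mnn by auto
  have card: "card {u\<in>{..<nu}. m u \<noteq> 0} \<le> CARD('y) + 4"
  proof -
    have "{u\<in>{..<nu}. m u \<noteq> 0} = {i\<in>?I. mu i \<noteq> 0}" by (auto simp: m_def)
    then show ?thesis using mu(3) by simp
  qed
  have ck: "(\<Sum>i\<in>?I. mu i * cc i k) = (\<Sum>i\<in>?I. r0 i * cc i k)" if "k < 4" for k using mu(5) that by auto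
  have e2: "(\<Sum>i\<in>?I. m i * g2 i) = (\<Sum>i\<in>?I. r0 i * g2 i)" using ck[of 0] by (simp add: msum cc_def)
  have e3: "(\<Sum>i\<in>?I. m i * g3 i) = (\<Sum>i\<in>?I. r0 i * g3 i)" using ck[of 1] by (simp add: msum cc_def)
  have e4: "(\<Sum>i\<in>?I. m i * g4 i) = (\<Sum>i\<in>?I. r0 i * g4 i)" using ck[of 2] by (simp add: msum cc_def)
  have e5: "(\<Sum>i\<in>?I. m i * g5 i) = (\<Sum>i\<in>?I. r0 i * g5 i)" using ck[of 3] by (simp add: msum cc_def)
  have e1: "(\<Sum>i\<in>?I. m i * g1 i) \<le> (\<Sum>i\<in>?I. r0 i * g1 i)" using mu(6) by (simp add: msum)
  have VU1: "validU nu (\<lambda>y u. m u * pu y u)"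
  proof -
    have "(\<Sum>u<nu. m u * pu y u) = 1" for y
    proof -
      have "(\<Sum>u<nu. m u * pu y u) = (\<Sum>u<nu. r0 u * pu y u)" using msum[of "\<lambda>u. pu y u"] mu(4) by simp
      also have "\<dots> = 1" unfolding r0pu using VU by (simp add: validU_def)
      finally show ?thesis .
    qed
    then show ?thesis using mnn VU by (auto simp: validU_def)
  qed
  let ?P1 = "joint pxy pzx (\<lambda>y u. m u * pu y u) pv pw"
  have P1: "?P1 = (\<lambda>\<omega>. m (vU \<omega>) * ?P \<omega>)" by (rule Pr)
  have es1: "ent ?Om ?P1 (\<lambda>\<omega>. (vY \<omega>, vZ \<omega>)) = ent ?Om ?P (\<lambda>\<omega>. (vY \<omega>, vZ \<omega>))"
    by (rule ent_marg_eq, rule marg_joint_u[OF VU1 VU VV VV VW VW]) simp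
  have es2: "ent ?Om ?P1 vZ = ent ?Om ?P vZ"
    by (rule ent_marg_eq, rule marg_joint_u[OF VU1 VU VV VV VW VW]) simp
  have ok1: "cmi ?Om ?P1 vY vU vZ \<le> R1"
  proof -
    have "cmi ?Om ?P1 vY vU vZ = ent ?Om ?P (\<lambda>\<omega>. (vY \<omega>, vZ \<omega>)) - ent ?Om ?P vZ + (\<Sum>i\<in>?I. m i * g1 i)"
      using mp[OF spec[OF g1, of m] mI] es1 es2 unfolding P1[symmetric] by simp
    moreover have "cmi ?Om ?P vY vU vZ = ent ?Om ?P (\<lambda>\<omega>. (vY \<omega>, vZ \<omega>)) - ent ?Om ?P vZ + (\<Sum>i\<in>?I. r0 i * g1 i)"
      using mp[OF spec[OF g1, of r0] r0nn] unfolding P0 .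
    ultimately show ?thesis using e1 okk by (simp add: ok_def)
  qed
  have ok2: "cmi ?Om ?P1 vZ vV (\<lambda>\<omega>. (vU \<omega>, vX \<omega>)) \<le> R2"
    using mp[OF spec[OF g2, of m] mI] mp[OF spec[OF g2, of r0] r0nn] e2 okk unfolding P1 P0 by (simp add: ok_def)
  have ok3: "cmi ?Om ?P1 vX vW (\<lambda>\<omega>. (vU \<omega>, vV \<omega>, vZ \<omega>)) \<le> R3"
    using mp[OF spec[OF g3, of m] mI] mp[OF spec[OF g3, of r0] r0nn] e3 okk unfolding P1 P0 by (simp add: ok_def)
  have ok4: "(\<Sum>\<omega>\<in>?Om. ?P1 \<omega> * dx (vX \<omega>) (xhat (vU \<omega>) (vW \<omega>) (vZ \<omega>))) \<le> Dx"
    using g4[rule_format, of m] g4[rule_format, of r0] e4 okk unfolding P1 by (simp add: ok_def P0')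
  have ok5: "(\<Sum>\<omega>\<in>?Om. ?P1 \<omega> * dz (vZ \<omega>) (zhat (vU \<omega>) (vV \<omega>) (vX \<omega>))) \<le> Dz"
    using g5[rule_format, of m] g5[rule_format, of r0] e5 okk unfolding P1 by (simp add: ok_def P0')
  show ?thesis
    by (intro exI[of _ m] conjI mnn card) (unfold ok_def, intro conjI VU1 VV VW ok1 ok2 ok3 ok4 ok5)
qed


lemma reweightV:
  fixes pxy :: "'x::finite \<Rightarrow> 'y::finite \<Rightarrow> real" and pzx :: "'x \<Rightarrow> 'z::finite \<Rightarrow> real"
  assumes pxy: "\<forall>x y. 0 \<le> pxy x y" and pzx: "\<forall>x z. 0 \<le> pzx x z"
    and okk: "ok pxy pzx dx dz Dx Dz nu nv nw pu pv pw xhat zhat R1 R2 R3"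
  shows "\<exists>m. (\<forall>v. 0 \<le> m v) \<and> card {v\<in>{..<nv}. m v \<noteq> 0} \<le> CARD('z) * nu + 3 \<and>
    ok pxy pzx dx dz Dx Dz nu nv nw pu (\<lambda>u z v. m v * pv u z v) pw xhat zhat R1 R2 R3"
proof -
  let ?Om = "outcomes nu nv nw :: ('x \<times> 'y \<times> 'z \<times> nat \<times> nat \<times> nat) set"
  let ?P = "joint pxy pzx pu pv pw"
  let ?I = "{..<nv}"
  let ?J = "{..<nu} \<times> (UNIV :: 'z set)"
  have VU: "validU nu pu" and VV: "validV nu nv pv" and VW: "validW nu nv nw pw" using okk by (auto simp: ok_def)
  have Pnn: "\<forall>\<omega>\<in>?Om. 0 \<le> ?P \<omega>" using joint_nonneg[OF pxy pzx VU VV VW] by blast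
  have GI: "vV ` ?Om \<subseteq> ?I" by (auto simp: outcomes_def)
  have fin: "finite ?Om" "finite ?I" by auto
  have Pr: "joint pxy pzx pu (\<lambda>u z v. r v * pv u z v) pw = (\<lambda>\<omega>. r (vV \<omega>) * ?P \<omega>)" for r
    by (rule ext) (auto simp: mult_ac)
  have Gid: "\<forall>\<omega>\<in>?Om. vV \<omega> = id (vV \<omega>)" by simp
  have Gf3: "\<forall>\<omega>\<in>?Om. vV \<omega> = (\<lambda>c. fst (snd c)) ((\<lambda>\<omega>. (vU \<omega>, vV \<omega>, vZ \<omega>)) \<omega>)" by simp
  obtain g1 where g1: "\<forall>r. (\<forall>i\<in>?I. r i \<ge> 0) \<longrightarrow> cmi ?Om (\<lambda>\<omega>. r (vV \<omega>) * ?P \<omega>) vZ vV (\<lambda>\<omega>. (vU \<omega>, vX \<omega>)) =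
     ent ?Om (\<lambda>\<omega>. r (vV \<omega>) * ?P \<omega>) (\<lambda>\<omega>. (vZ \<omega>, vU \<omega>, vX \<omega>)) - ent ?Om (\<lambda>\<omega>. r (vV \<omega>) * ?P \<omega>) (\<lambda>\<omega>. (vU \<omega>, vX \<omega>)) + (\<Sum>i\<in>?I. r i * g1 i)"
    using cmi_lin2[where g=id and A=vZ and B=vV and C="\<lambda>\<omega>. (vU \<omega>, vX \<omega>)", OF fin GI Pnn Gid] by (elim exE) (rule that)
  obtain g3 where g3: "\<forall>r. (\<forall>i\<in>?I. r i \<ge> 0) \<longrightarrow> cmi ?Om (\<lambda>\<omega>. r (vV \<omega>) * ?P \<omega>) vX vW (\<lambda>\<omega>. (vU \<omega>, vV \<omega>, vZ \<omega>)) = (\<Sum>i\<in>?I. r i * g3 i)"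
    using cmi_lin1[where g="\<lambda>c. fst (snd c)" and A=vX and B=vW and C="\<lambda>\<omega>. (vU \<omega>, vV \<omega>, vZ \<omega>)", OF fin GI Pnn Gf3] by (elim exE) (rule that)
  obtain g4 where g4: "\<forall>r. (\<Sum>\<omega>\<in>?Om. (r (vV \<omega>) * ?P \<omega>) * dx (vX \<omega>) (xhat (vU \<omega>) (vW \<omega>) (vZ \<omega>))) = (\<Sum>i\<in>?I. r i * g4 i)"
    using sum_lin[where P="?P" and F="\<lambda>\<omega>. dx (vX \<omega>) (xhat (vU \<omega>) (vW \<omega>) (vZ \<omega>))", OF fin GI] by (elim exE) (rule that)
  obtain g5 where g5: "\<forall>r. (\<Sum>\<omega>\<in>?Om. (r (vV \<omega>) * ?P \<omega>) * dz (vZ \<omega>) (zhat (vU \<omega>) (vV \<omega>) (vX \<omega>))) = (\<Sum>i\<in>?I. r i * g5 i)"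
    using sum_lin[where P="?P" and F="\<lambda>\<omega>. dz (vZ \<omega>) (zhat (vU \<omega>) (vV \<omega>) (vX \<omega>))", OF fin GI] by (elim exE) (rule that)
  define a where "a v j = pv (fst j) (snd j) v" for v and j :: "nat \<times> 'z"
  define r0 where "r0 v = (if 0 < (\<Sum>j\<in>?J. a v j) then 1 else (0::real))" for v
  have r0pv: "r0 v * pv u z v = pv u z v" if "u < nu" for u z v
  proof (cases "0 < (\<Sum>j\<in>?J. a v j)")
    case True then show ?thesis by (simp add: r0_def)
  next
    case False
    have nn: "\<forall>j\<in>?J. 0 \<le> a v j" using VV by (simp add: validV_def a_def)
    then have "(\<Sum>j\<in>?J. a v j) = 0" using False sum_nonneg[of ?J "a v"] by force
    then have "a v (u, z) = 0" using sum_nonneg_eq_0_iff[of ?J "a v"] nn that by simp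
    then show ?thesis by (simp add: a_def)
  qed
  have P0': "\<forall>\<omega>\<in>?Om. r0 (vV \<omega>) * ?P \<omega> = ?P \<omega>"
  proof
    fix \<omega> assume "\<omega> \<in> ?Om"
    then obtain x y z u v w where "\<omega> = (x,y,z,u,v,w)" "u < nu" by (cases \<omega>) auto
    then show "r0 (vV \<omega>) * ?P \<omega> = ?P \<omega>" using r0pv[of u v z]
      by (simp only: joint_simp v_simps) (metis mult.assoc mult.commute)
  qed
  have r0nn: "\<forall>i\<in>?I. r0 i \<ge> 0" by (simp add: r0_def)
  define cc where "cc v k = (if k = 0 then g3 v else if k = (1::nat) then g4 v else g5 v)" for v k
  have pos: "\<forall>i\<in>?I. r0 i \<noteq> 0 \<longrightarrow> (\<Sum>j\<in>?J. a i j) > 0" by (simp add: r0_def)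
  from support_reduce[of ?I ?J "{..<3::nat}" r0 a cc g1, OF finite_lessThan _ finite_lessThan r0nn pos]
  obtain mu where mu: "\<forall>i\<in>?I. mu i \<ge> 0" "\<forall>i\<in>?I. mu i \<noteq> 0 \<longrightarrow> r0 i \<noteq> 0"
      "card {i\<in>?I. mu i \<noteq> 0} \<le> card ?J + card {..<3::nat}"
      "\<forall>j\<in>?J. (\<Sum>i\<in>?I. mu i * a i j) = (\<Sum>i\<in>?I. r0 i * a i j)"
      "\<forall>k\<in>{..<3::nat}. (\<Sum>i\<in>?I. mu i * cc i k) = (\<Sum>i\<in>?I. r0 i * cc i k)"
      "(\<Sum>i\<in>?I. mu i * g1 i) \<le> (\<Sum>i\<in>?I. r0 i * g1 i)"
    by (auto elim!: exE conjE intro: that)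
  define m where "m v = (if v < nv then mu v else 0)" for v
  have mnn: "\<forall>v. 0 \<le> m v" using mu(1) by (simp add: m_def)
  have msum: "(\<Sum>i\<in>?I. m i * f i) = (\<Sum>i\<in>?I. mu i * f i)" for f by (rule sum.cong) (auto simp: m_def)
  have mI: "\<forall>i\<in>?I. m i \<ge> 0" using mnn by auto
  have card: "card {v\<in>{..<nv}. m v \<noteq> 0} \<le> CARD('z) * nu + 3"
  proof -
    have "{v\<in>{..<nv}. m v \<noteq> 0} = {i\<in>?I. mu i \<noteq> 0}" by (auto simp: m_def)
    moreover have "card ?J = CARD('z) * nu" by (simp add: card_cartesian_product)
    ultimately show ?thesis using mu(3) by (simp add: mult.commute)
  qed
  have ck: "(\<Sum>i\<in>?I. mu i * cc i k) = (\<Sum>i\<in>?I. r0 i * cc i k)" if "k < 3" for k using mu(5) that by auto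
  have e3: "(\<Sum>i\<in>?I. m i * g3 i) = (\<Sum>i\<in>?I. r0 i * g3 i)" using ck[of 0] by (simp add: msum cc_def)
  have e4: "(\<Sum>i\<in>?I. m i * g4 i) = (\<Sum>i\<in>?I. r0 i * g4 i)" using ck[of 1] by (simp add: msum cc_def)
  have e5: "(\<Sum>i\<in>?I. m i * g5 i) = (\<Sum>i\<in>?I. r0 i * g5 i)" using ck[of 2] by (simp add: msum cc_def)
  have e1: "(\<Sum>i\<in>?I. m i * g1 i) \<le> (\<Sum>i\<in>?I. r0 i * g1 i)" using mu(6) by (simp add: msum)
  have VV1: "validV nu nv (\<lambda>u z v. m v * pv u z v)"
  proof -
    have "(\<Sum>v<nv. m v * pv u z v) = 1" if "u < nu" for u z
    proof -
      have "(\<Sum>v<nv. m v * pv u z v) = (\<Sum>v<nv. r0 v * pv u z v)"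
        using msum[of "\<lambda>v. pv u z v"] mu(4) that by (simp add: a_def)
      also have "\<dots> = (\<Sum>v<nv. pv u z v)" unfolding r0pv[OF that] ..
      also have "\<dots> = 1" using VV that by (simp add: validV_def)
      finally show ?thesis .
    qed
    then show ?thesis using mnn VV by (auto simp: validV_def)
  qed
  let ?P1 = "joint pxy pzx pu (\<lambda>u z v. m v * pv u z v) pw"
  have P1: "?P1 = (\<lambda>\<omega>. m (vV \<omega>) * ?P \<omega>)" by (rule Pr)
  have es: "ent ?Om ?P1 A = ent ?Om ?P A" if "\<And>x y z u v w. A (x,y,z,u,v,w) = A (x,y,z,u,0,0)"
    for A :: "_ \<Rightarrow> 'y \<times> 'z"
    by (rule ent_marg_eq, rule marg_joint_v[where A=A, OF VV1 VV VW VW that])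
  have es1: "ent ?Om ?P1 (\<lambda>\<omega>. (vZ \<omega>, vU \<omega>, vX \<omega>)) = ent ?Om ?P (\<lambda>\<omega>. (vZ \<omega>, vU \<omega>, vX \<omega>))"
    by (rule ent_marg_eq, rule marg_joint_v[OF VV1 VV VW VW]) simp
  have es2: "ent ?Om ?P1 (\<lambda>\<omega>. (vU \<omega>, vX \<omega>)) = ent ?Om ?P (\<lambda>\<omega>. (vU \<omega>, vX \<omega>))"
    by (rule ent_marg_eq, rule marg_joint_v[OF VV1 VV VW VW]) simp
  have ok1: "cmi ?Om ?P1 vY vU vZ \<le> R1"
  proof -
    have "ent ?Om ?P1 (\<lambda>\<omega>. (vY \<omega>, vZ \<omega>)) = ent ?Om ?P (\<lambda>\<omega>. (vY \<omega>, vZ \<omega>))"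
      by (rule ent_marg_eq, rule marg_joint_v[OF VV1 VV VW VW]) simp
    moreover have "ent ?Om ?P1 (\<lambda>\<omega>. (vU \<omega>, vZ \<omega>)) = ent ?Om ?P (\<lambda>\<omega>. (vU \<omega>, vZ \<omega>))"
      by (rule ent_marg_eq, rule marg_joint_v[OF VV1 VV VW VW]) simp
    moreover have "ent ?Om ?P1 (\<lambda>\<omega>. (vY \<omega>, vU \<omega>, vZ \<omega>)) = ent ?Om ?P (\<lambda>\<omega>. (vY \<omega>, vU \<omega>, vZ \<omega>))"
      by (rule ent_marg_eq, rule marg_joint_v[OF VV1 VV VW VW]) simp
    moreover have "ent ?Om ?P1 vZ = ent ?Om ?P vZ"
      by (rule ent_marg_eq, rule marg_joint_v[OF VV1 VV VW VW]) simp
    ultimately have "cmi ?Om ?P1 vY vU vZ = cmi ?Om ?P vY vU vZ" unfolding cmi_def by simp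
    then show ?thesis using okk by (simp add: ok_def)
  qed
  have ok2: "cmi ?Om ?P1 vZ vV (\<lambda>\<omega>. (vU \<omega>, vX \<omega>)) \<le> R2"
  proof -
    have "cmi ?Om ?P1 vZ vV (\<lambda>\<omega>. (vU \<omega>, vX \<omega>)) = ent ?Om ?P (\<lambda>\<omega>. (vZ \<omega>, vU \<omega>, vX \<omega>)) - ent ?Om ?P (\<lambda>\<omega>. (vU \<omega>, vX \<omega>)) + (\<Sum>i\<in>?I. m i * g1 i)"
      using mp[OF spec[OF g1, of m] mI] es1 es2 unfolding P1[symmetric] by simp
    moreover have "cmi ?Om ?P vZ vV (\<lambda>\<omega>. (vU \<omega>, vX \<omega>)) = ent ?Om ?P (\<lambda>\<omega>. (vZ \<omega>, vU \<omega>, vX \<omega>)) - ent ?Om ?P (\<lambda>\<omega>. (vU \<omega>, vX \<omega>)) + (\<Sum>i\<in>?I. r0 i * g1 i)"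
      using mp[OF spec[OF g1, of r0] r0nn] unfolding cmi_cong[OF P0'] ent_cong[OF P0'] .
    ultimately show ?thesis using e1 okk by (simp add: ok_def)
  qed
  have ok3: "cmi ?Om ?P1 vX vW (\<lambda>\<omega>. (vU \<omega>, vV \<omega>, vZ \<omega>)) \<le> R3"
    using mp[OF spec[OF g3, of m] mI] mp[OF spec[OF g3, of r0] r0nn] e3 okk unfolding P1 cmi_cong[OF P0'] by (simp add: ok_def)
  have s4: "(\<Sum>\<omega>\<in>?Om. (r0 (vV \<omega>) * ?P \<omega>) * F \<omega>) = (\<Sum>\<omega>\<in>?Om. ?P \<omega> * F \<omega>)" for F
    using P0' by (intro sum.cong) auto
  have ok4: "(\<Sum>\<omega>\<in>?Om. ?P1 \<omega> * dx (vX \<omega>) (xhat (vU \<omega>) (vW \<omega>) (vZ \<omega>))) \<le> Dx"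
    using g4[rule_format, of m] g4[rule_format, of r0] e4 okk unfolding P1 s4 by (simp add: ok_def)
  have ok5: "(\<Sum>\<omega>\<in>?Om. ?P1 \<omega> * dz (vZ \<omega>) (zhat (vU \<omega>) (vV \<omega>) (vX \<omega>))) \<le> Dz"
    using g5[rule_format, of m] g5[rule_format, of r0] e5 okk unfolding P1 s4 by (simp add: ok_def)
  show ?thesis
    by (intro exI[of _ m] conjI mnn card) (unfold ok_def, intro conjI VU VV1 VW ok1 ok2 ok3 ok4 ok5)
qed


lemma reweightW:
  fixes pxy :: "'x::finite \<Rightarrow> 'y::finite \<Rightarrow> real" and pzx :: "'x \<Rightarrow> 'z::finite \<Rightarrow> real"
  assumes pxy: "\<forall>x y. 0 \<le> pxy x y" and pzx: "\<forall>x z. 0 \<le> pzx x z"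
    and okk: "ok pxy pzx dx dz Dx Dz nu nv nw pu pv pw xhat zhat R1 R2 R3"
  shows "\<exists>m. (\<forall>w. 0 \<le> m w) \<and> card {w\<in>{..<nw}. m w \<noteq> 0} \<le> nu * nv * CARD('x) + 1 \<and>
    ok pxy pzx dx dz Dx Dz nu nv nw pu pv (\<lambda>u v x w. m w * pw u v x w) xhat zhat R1 R2 R3"
proof -
  let ?Om = "outcomes nu nv nw :: ('x \<times> 'y \<times> 'z \<times> nat \<times> nat \<times> nat) set"
  let ?P = "joint pxy pzx pu pv pw"
  let ?I = "{..<nw}"
  let ?J = "{..<nu} \<times> {..<nv} \<times> (UNIV :: 'x set)"
  have VU: "validU nu pu" and VV: "validV nu nv pv" and VW: "validW nu nv nw pw" using okk by (auto simp: ok_def)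
  have Pnn: "\<forall>\<omega>\<in>?Om. 0 \<le> ?P \<omega>" using joint_nonneg[OF pxy pzx VU VV VW] by blast
  have GI: "vW ` ?Om \<subseteq> ?I" by (auto simp: outcomes_def)
  have fin: "finite ?Om" "finite ?I" by auto
  have Pr: "joint pxy pzx pu pv (\<lambda>u v x w. r w * pw u v x w) = (\<lambda>\<omega>. r (vW \<omega>) * ?P \<omega>)" for r
    by (rule ext) (auto simp: mult_ac)
  have Gid: "\<forall>\<omega>\<in>?Om. vW \<omega> = id (vW \<omega>)" by simp
  obtain g1 where g1: "\<forall>r. (\<forall>i\<in>?I. r i \<ge> 0) \<longrightarrow> cmi ?Om (\<lambda>\<omega>. r (vW \<omega>) * ?P \<omega>) vX vW (\<lambda>\<omega>. (vU \<omega>, vV \<omega>, vZ \<omega>)) =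
     ent ?Om (\<lambda>\<omega>. r (vW \<omega>) * ?P \<omega>) (\<lambda>\<omega>. (vX \<omega>, vU \<omega>, vV \<omega>, vZ \<omega>)) - ent ?Om (\<lambda>\<omega>. r (vW \<omega>) * ?P \<omega>) (\<lambda>\<omega>. (vU \<omega>, vV \<omega>, vZ \<omega>)) + (\<Sum>i\<in>?I. r i * g1 i)"
    using cmi_lin2[where g=id and A=vX and B=vW and C="\<lambda>\<omega>. (vU \<omega>, vV \<omega>, vZ \<omega>)", OF fin GI Pnn Gid] by (elim exE) (rule that)
  obtain g4 where g4: "\<forall>r. (\<Sum>\<omega>\<in>?Om. (r (vW \<omega>) * ?P \<omega>) * dx (vX \<omega>) (xhat (vU \<omega>) (vW \<omega>) (vZ \<omega>))) = (\<Sum>i\<in>?I. r i * g4 i)"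
    using sum_lin[where P="?P" and F="\<lambda>\<omega>. dx (vX \<omega>) (xhat (vU \<omega>) (vW \<omega>) (vZ \<omega>))", OF fin GI] by (elim exE) (rule that)
  define a where "a w j = pw (fst j) (fst (snd j)) (snd (snd j)) w" for w and j :: "nat \<times> nat \<times> 'x"
  define r0 where "r0 w = (if 0 < (\<Sum>j\<in>?J. a w j) then 1 else (0::real))" for w
  have r0pw: "r0 w * pw u v x w = pw u v x w" if "u < nu" "v < nv" for u v x w
  proof (cases "0 < (\<Sum>j\<in>?J. a w j)")
    case True then show ?thesis by (simp add: r0_def)
  next
    case False
    have nn: "\<forall>j\<in>?J. 0 \<le> a w j" using VW by (simp add: validW_def a_def)
    then have "(\<Sum>j\<in>?J. a w j) = 0" using False sum_nonneg[of ?J "a w"] by force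
    then have "a w (u, v, x) = 0" using sum_nonneg_eq_0_iff[of ?J "a w"] nn that by simp
    then show ?thesis by (simp add: a_def)
  qed
  have P0': "\<forall>\<omega>\<in>?Om. r0 (vW \<omega>) * ?P \<omega> = ?P \<omega>"
  proof
    fix \<omega> assume "\<omega> \<in> ?Om"
    then obtain x y z u v w where "\<omega> = (x,y,z,u,v,w)" "u < nu" "v < nv" by (cases \<omega>) auto
    then show "r0 (vW \<omega>) * ?P \<omega> = ?P \<omega>" using r0pw[of u v w x]
      by (simp only: joint_simp v_simps) (metis mult.assoc mult.commute)
  qed
  have r0nn: "\<forall>i\<in>?I. r0 i \<ge> 0" by (simp add: r0_def)
  define cc where "cc w k = g4 w" for w and k :: nat
  have pos: "\<forall>i\<in>?I. r0 i \<noteq> 0 \<longrightarrow> (\<Sum>j\<in>?J. a i j) > 0" by (simp add: r0_def)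
  from support_reduce[of ?I ?J "{..<1::nat}" r0 a cc g1, OF finite_lessThan _ finite_lessThan r0nn pos]
  obtain mu where mu: "\<forall>i\<in>?I. mu i \<ge> 0" "\<forall>i\<in>?I. mu i \<noteq> 0 \<longrightarrow> r0 i \<noteq> 0"
      "card {i\<in>?I. mu i \<noteq> 0} \<le> card ?J + card {..<1::nat}"
      "\<forall>j\<in>?J. (\<Sum>i\<in>?I. mu i * a i j) = (\<Sum>i\<in>?I. r0 i * a i j)"
      "\<forall>k\<in>{..<1::nat}. (\<Sum>i\<in>?I. mu i * cc i k) = (\<Sum>i\<in>?I. r0 i * cc i k)"
      "(\<Sum>i\<in>?I. mu i * g1 i) \<le> (\<Sum>i\<in>?I. r0 i * g1 i)"
    by (auto elim!: exE conjE intro: that)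
  define m where "m w = (if w < nw then mu w else 0)" for w
  have mnn: "\<forall>w. 0 \<le> m w" using mu(1) by (simp add: m_def)
  have msum: "(\<Sum>i\<in>?I. m i * f i) = (\<Sum>i\<in>?I. mu i * f i)" for f by (rule sum.cong) (auto simp: m_def)
  have mI: "\<forall>i\<in>?I. m i \<ge> 0" using mnn by auto
  have card: "card {w\<in>{..<nw}. m w \<noteq> 0} \<le> nu * nv * CARD('x) + 1"
  proof -
    have "{w\<in>{..<nw}. m w \<noteq> 0} = {i\<in>?I. mu i \<noteq> 0}" by (auto simp: m_def)
    moreover have "card ?J = nu * nv * CARD('x)" by (simp add: card_cartesian_product)
    ultimately show ?thesis using mu(3) by (simp add: mult.assoc)
  qed
  have e4: "(\<Sum>i\<in>?I. m i * g4 i) = (\<Sum>i\<in>?I. r0 i * g4 i)" using mu(5) by (simp add: msum cc_def)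
  have e1: "(\<Sum>i\<in>?I. m i * g1 i) \<le> (\<Sum>i\<in>?I. r0 i * g1 i)" using mu(6) by (simp add: msum)
  have VW1: "validW nu nv nw (\<lambda>u v x w. m w * pw u v x w)"
  proof -
    have "(\<Sum>w<nw. m w * pw u v x w) = 1" if "u < nu" "v < nv" for u v x
    proof -
      have "(\<Sum>w<nw. m w * pw u v x w) = (\<Sum>w<nw. r0 w * pw u v x w)"
        using msum[of "\<lambda>w. pw u v x w"] mu(4) that by (simp add: a_def)
      also have "\<dots> = (\<Sum>w<nw. pw u v x w)" unfolding r0pw[OF that] ..
      also have "\<dots> = 1" using VW that by (simp add: validW_def)
      finally show ?thesis .
    qed
    then show ?thesis using mnn VW by (auto simp: validW_def)
  qed
  let ?P1 = "joint pxy pzx pu pv (\<lambda>u v x w. m w * pw u v x w)"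
  have P1: "?P1 = (\<lambda>\<omega>. m (vW \<omega>) * ?P \<omega>)" by (rule Pr)
  have es1: "ent ?Om ?P1 (\<lambda>\<omega>. (vX \<omega>, vU \<omega>, vV \<omega>, vZ \<omega>)) = ent ?Om ?P (\<lambda>\<omega>. (vX \<omega>, vU \<omega>, vV \<omega>, vZ \<omega>))"
    by (rule ent_marg_eq, rule marg_joint_w[OF VW1 VW]) simp
  have es2: "ent ?Om ?P1 (\<lambda>\<omega>. (vU \<omega>, vV \<omega>, vZ \<omega>)) = ent ?Om ?P (\<lambda>\<omega>. (vU \<omega>, vV \<omega>, vZ \<omega>))"
    by (rule ent_marg_eq, rule marg_joint_w[OF VW1 VW]) simp
  have ok1: "cmi ?Om ?P1 vY vU vZ \<le> R1"
  proof -
    have "ent ?Om ?P1 (\<lambda>\<omega>. (vY \<omega>, vZ \<omega>)) = ent ?Om ?P (\<lambda>\<omega>. (vY \<omega>, vZ \<omega>))"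
      by (rule ent_marg_eq, rule marg_joint_w[OF VW1 VW]) simp
    moreover have "ent ?Om ?P1 (\<lambda>\<omega>. (vU \<omega>, vZ \<omega>)) = ent ?Om ?P (\<lambda>\<omega>. (vU \<omega>, vZ \<omega>))"
      by (rule ent_marg_eq, rule marg_joint_w[OF VW1 VW]) simp
    moreover have "ent ?Om ?P1 (\<lambda>\<omega>. (vY \<omega>, vU \<omega>, vZ \<omega>)) = ent ?Om ?P (\<lambda>\<omega>. (vY \<omega>, vU \<omega>, vZ \<omega>))"
      by (rule ent_marg_eq, rule marg_joint_w[OF VW1 VW]) simp
    moreover have "ent ?Om ?P1 vZ = ent ?Om ?P vZ"
      by (rule ent_marg_eq, rule marg_joint_w[OF VW1 VW]) simp
    ultimately have "cmi ?Om ?P1 vY vU vZ = cmi ?Om ?P vY vU vZ" unfolding cmi_def by simp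
    then show ?thesis using okk by (simp add: ok_def)
  qed
  have ok2: "cmi ?Om ?P1 vZ vV (\<lambda>\<omega>. (vU \<omega>, vX \<omega>)) \<le> R2"
  proof -
    have "ent ?Om ?P1 (\<lambda>\<omega>. (vZ \<omega>, vU \<omega>, vX \<omega>)) = ent ?Om ?P (\<lambda>\<omega>. (vZ \<omega>, vU \<omega>, vX \<omega>))"
      by (rule ent_marg_eq, rule marg_joint_w[OF VW1 VW]) simp
    moreover have "ent ?Om ?P1 (\<lambda>\<omega>. (vV \<omega>, vU \<omega>, vX \<omega>)) = ent ?Om ?P (\<lambda>\<omega>. (vV \<omega>, vU \<omega>, vX \<omega>))"
      by (rule ent_marg_eq, rule marg_joint_w[OF VW1 VW]) simp
    moreover have "ent ?Om ?P1 (\<lambda>\<omega>. (vZ \<omega>, vV \<omega>, vU \<omega>, vX \<omega>)) = ent ?Om ?P (\<lambda>\<omega>. (vZ \<omega>, vV \<omega>, vU \<omega>, vX \<omega>))"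
      by (rule ent_marg_eq, rule marg_joint_w[OF VW1 VW]) simp
    moreover have "ent ?Om ?P1 (\<lambda>\<omega>. (vU \<omega>, vX \<omega>)) = ent ?Om ?P (\<lambda>\<omega>. (vU \<omega>, vX \<omega>))"
      by (rule ent_marg_eq, rule marg_joint_w[OF VW1 VW]) simp
    ultimately have "cmi ?Om ?P1 vZ vV (\<lambda>\<omega>. (vU \<omega>, vX \<omega>)) = cmi ?Om ?P vZ vV (\<lambda>\<omega>. (vU \<omega>, vX \<omega>))"
      unfolding cmi_def by simp
    then show ?thesis using okk by (simp add: ok_def)
  qed
  have ok3: "cmi ?Om ?P1 vX vW (\<lambda>\<omega>. (vU \<omega>, vV \<omega>, vZ \<omega>)) \<le> R3"
  proof -
    have "cmi ?Om ?P1 vX vW (\<lambda>\<omega>. (vU \<omega>, vV \<omega>, vZ \<omega>)) = ent ?Om ?P (\<lambda>\<omega>. (vX \<omega>, vU \<omega>, vV \<omega>, vZ \<omega>)) - ent ?Om ?P (\<lambda>\<omega>. (vU \<omega>, vV \<omega>, vZ \<omega>)) + (\<Sum>i\<in>?I. m i * g1 i)"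
      using mp[OF spec[OF g1, of m] mI] es1 es2 unfolding P1[symmetric] by simp
    moreover have "cmi ?Om ?P vX vW (\<lambda>\<omega>. (vU \<omega>, vV \<omega>, vZ \<omega>)) = ent ?Om ?P (\<lambda>\<omega>. (vX \<omega>, vU \<omega>, vV \<omega>, vZ \<omega>)) - ent ?Om ?P (\<lambda>\<omega>. (vU \<omega>, vV \<omega>, vZ \<omega>)) + (\<Sum>i\<in>?I. r0 i * g1 i)"
      using mp[OF spec[OF g1, of r0] r0nn] unfolding cmi_cong[OF P0'] ent_cong[OF P0'] .
    ultimately show ?thesis using e1 okk by (simp add: ok_def)
  qed
  have s4: "(\<Sum>\<omega>\<in>?Om. (r0 (vW \<omega>) * ?P \<omega>) * F \<omega>) = (\<Sum>\<omega>\<in>?Om. ?P \<omega> * F \<omega>)" for F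
    using P0' by (intro sum.cong) auto
  have ok4: "(\<Sum>\<omega>\<in>?Om. ?P1 \<omega> * dx (vX \<omega>) (xhat (vU \<omega>) (vW \<omega>) (vZ \<omega>))) \<le> Dx"
    using g4[rule_format, of m] g4[rule_format, of r0] e4 okk unfolding P1 s4 by (simp add: ok_def)
  have ok5: "(\<Sum>\<omega>\<in>?Om. ?P1 \<omega> * dz (vZ \<omega>) (zhat (vU \<omega>) (vV \<omega>) (vX \<omega>))) \<le> Dz"
  proof -
    have "(\<Sum>\<omega>\<in>?Om. ?P1 \<omega> * dz (vZ \<omega>) (zhat (vU \<omega>) (vV \<omega>) (vX \<omega>))) =
          (\<Sum>\<omega>\<in>?Om. ?P \<omega> * dz (vZ \<omega>) (zhat (vU \<omega>) (vV \<omega>) (vX \<omega>)))"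
      by (subst (1 2) sum_joint_w[where F="\<lambda>\<omega>. dz (vZ \<omega>) (zhat (vU \<omega>) (vV \<omega>) (vX \<omega>))"]) (use VW VW1 in simp_all)
    then show ?thesis using okk by (simp add: ok_def)
  qed
  show ?thesis
    by (intro exI[of _ m] conjI mnn card) (unfold ok_def, intro conjI VU VV VW1 ok1 ok2 ok3 ok4 ok5)
qed


lemma reduce:
  fixes pxy :: "'x::finite \<Rightarrow> 'y::finite \<Rightarrow> real" and pzx :: "'x \<Rightarrow> 'z::finite \<Rightarrow> real"
  assumes pxy: "\<forall>x y. 0 \<le> pxy x y" and pzx: "\<forall>x z. 0 \<le> pzx x z"
    and okk: "ok pxy pzx dx dz Dx Dz nu nv nw pu pv pw xhat zhat R1 R2 R3"
  shows "\<exists>nu nv nw pu pv pw xhat zhat. (nu \<le> CARD('y) + 4 \<and> nv \<le> CARD('z) * nu + 3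
                             \<and> nw \<le> nu * nv * CARD('x) + 1) \<and>
     ok pxy pzx dx dz Dx Dz nu nv nw pu pv pw xhat zhat R1 R2 R3"
proof -
  obtain m1 where m1: "\<forall>u. 0 \<le> m1 u" "card {u\<in>{..<nu}. m1 u \<noteq> 0} \<le> CARD('y) + 4"
    "ok pxy pzx dx dz Dx Dz nu nv nw (\<lambda>y u. m1 u * pu y u) pv pw xhat zhat R1 R2 R3"
    using reweightU[OF pxy pzx okk] by blast
  define T1 where "T1 = {u\<in>{..<nu}. m1 u \<noteq> 0}"
  obtain e1 where e1: "bij_betw e1 {..<card T1} T1"
    using ex_bij_betw_nat_finite[of T1] by (auto simp: T1_def atLeast0LessThan)
  define n1 where "n1 = card T1"
  have ok1: "ok pxy pzx dx dz Dx Dz n1 nv nw (\<lambda>y k. m1 (e1 k) * pu y (e1 k)) (\<lambda>k. pv (e1 k)) (\<lambda>k. pw (e1 k))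
           (\<lambda>k. xhat (e1 k)) (\<lambda>k. zhat (e1 k)) R1 R2 R3"
    unfolding n1_def by (rule relabelU[OF m1(3) e1]) (auto simp: T1_def)
  have n1: "n1 \<le> CARD('y) + 4" using m1(2) by (simp add: n1_def T1_def)
  let ?pu1 = "\<lambda>y k. m1 (e1 k) * pu y (e1 k)"
  let ?pv1 = "\<lambda>k. pv (e1 k)"
  let ?pw1 = "\<lambda>k. pw (e1 k)"
  let ?xh1 = "\<lambda>k. xhat (e1 k)"
  let ?zh1 = "\<lambda>k. zhat (e1 k)"
  obtain m2 where m2: "\<forall>v. 0 \<le> m2 v" "card {v\<in>{..<nv}. m2 v \<noteq> 0} \<le> CARD('z) * n1 + 3"
    "ok pxy pzx dx dz Dx Dz n1 nv nw ?pu1 (\<lambda>u z v. m2 v * ?pv1 u z v) ?pw1 ?xh1 ?zh1 R1 R2 R3"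
    using reweightV[OF pxy pzx ok1] by blast
  define T2 where "T2 = {v\<in>{..<nv}. m2 v \<noteq> 0}"
  obtain e2 where e2: "bij_betw e2 {..<card T2} T2"
    using ex_bij_betw_nat_finite[of T2] by (auto simp: T2_def atLeast0LessThan)
  define n2 where "n2 = card T2"
  have ok2: "ok pxy pzx dx dz Dx Dz n1 n2 nw ?pu1 (\<lambda>u z k. m2 (e2 k) * ?pv1 u z (e2 k)) (\<lambda>u k. ?pw1 u (e2 k))
           ?xh1 (\<lambda>u k. ?zh1 u (e2 k)) R1 R2 R3"
    unfolding n2_def by (rule relabelV[OF m2(3) e2]) (auto simp: T2_def)
  have n2: "n2 \<le> CARD('z) * n1 + 3" using m2(2) by (simp add: n2_def T2_def)
  let ?pv2 = "\<lambda>u z k. m2 (e2 k) * ?pv1 u z (e2 k)"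
  let ?pw2 = "\<lambda>u k. ?pw1 u (e2 k)"
  let ?zh2 = "\<lambda>u k. ?zh1 u (e2 k)"
  obtain m3 where m3: "\<forall>w. 0 \<le> m3 w" "card {w\<in>{..<nw}. m3 w \<noteq> 0} \<le> n1 * n2 * CARD('x) + 1"
    "ok pxy pzx dx dz Dx Dz n1 n2 nw ?pu1 ?pv2 (\<lambda>u v x w. m3 w * ?pw2 u v x w) ?xh1 ?zh2 R1 R2 R3"
    using reweightW[OF pxy pzx ok2] by blast
  define T3 where "T3 = {w\<in>{..<nw}. m3 w \<noteq> 0}"
  obtain e3 where e3: "bij_betw e3 {..<card T3} T3"
    using ex_bij_betw_nat_finite[of T3] by (auto simp: T3_def atLeast0LessThan)
  define n3 where "n3 = card T3"
  have ok3: "ok pxy pzx dx dz Dx Dz n1 n2 n3 ?pu1 ?pv2 (\<lambda>u v x k. m3 (e3 k) * ?pw2 u v x (e3 k))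
           (\<lambda>u k z. ?xh1 u (e3 k) z) ?zh2 R1 R2 R3"
    unfolding n3_def by (rule relabelW[OF m3(3) e3]) (auto simp: T3_def)
  have n3: "n3 \<le> n1 * n2 * CARD('x) + 1" using m3(2) by (simp add: n3_def T3_def)
  show ?thesis using ok3 n1 n2 n3 by blast
qed



lemma sum_lessThan_add_split:
  fixes f :: "nat \<Rightarrow> 'a::comm_monoid_add"
  shows "(\<Sum>u<a + b. f u) = (\<Sum>u<a. f u) + (\<Sum>u<b. f (a + u))"
  by (induction b) (simp_all add: add.assoc)

lemma ok_pos:
  fixes pxy :: "'x::finite \<Rightarrow> 'y::finite \<Rightarrow> real" and pzx :: "'x \<Rightarrow> 'z::finite \<Rightarrow> real"
  assumes "ok pxy pzx dx dz Dx Dz nu nv nw pu pv pw xhat zhat R1 R2 R3"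
  shows "0 < nu" "0 < nv" "0 < nw"
proof -
  have U: "(\<Sum>u<nu. pu y u) = 1" for y using assms by (simp add: ok_def validU_def)
  show nu: "0 < nu" using U[of undefined] by (cases nu) auto
  have V: "(\<Sum>v<nv. pv 0 z v) = 1" for z using assms nu by (simp add: ok_def validV_def)
  show nv: "0 < nv" using V[of undefined] by (cases nv) auto
  have W: "(\<Sum>w<nw. pw 0 0 x w) = 1" for x using assms nu nv by (simp add: ok_def validW_def)
  show "0 < nw" using W[of undefined] by (cases nw) auto
qed



lemma sum_lt_restrict:
  fixes g :: "nat \<Rightarrow> 'a::comm_monoid_add"
  assumes "k \<le> n" shows "(\<Sum>v<n. if v < k then g v else 0) = (\<Sum>v<k. g v)"
proof -
  have "(\<Sum>v<n. if v < k then g v else 0) = sum g ({..<n} \<inter> {v. v < k})"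
    by (subst sum.inter_restrict) auto
  also have "{..<n} \<inter> {v. v < k} = {..<k}" using assms by auto
  finally show ?thesis .
qed

lemma mix:
  fixes pxy :: "'x::finite \<Rightarrow> 'y::finite \<Rightarrow> real" and pzx :: "'x \<Rightarrow> 'z::finite \<Rightarrow> real"
  assumes pxy: "\<forall>x y. 0 \<le> pxy x y" and pzx: "\<forall>x z. 0 \<le> pzx x z"
    and ok1: "ok pxy pzx dx dz Dx Dz nu1 nv1 nw1 pu1 pv1 pw1 xh1 zh1 A1 A2 A3"
    and ok2: "ok pxy pzx dx dz Dx Dz nu2 nv2 nw2 pu2 pv2 pw2 xh2 zh2 B1 B2 B3"
    and ab: "0 \<le> a" "0 \<le> b" "a + b = 1"
  shows "\<exists>nu nv nw pu pv pw xhat zhat. ok pxy pzx dx dz Dx Dz nu nv nw pu pv pw xhat zhat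
           (a * A1 + b * B1) (a * A2 + b * B2) (a * A3 + b * B3)"
proof -
  define nu where "nu = nu1 + nu2"
  define nv where "nv = max nv1 nv2"
  define nw where "nw = max nw1 nw2"
  define pu0 where "pu0 y u = (if u < nu1 then pu1 y u else pu2 y (u - nu1))" for y u
  define pv0 where "pv0 u z v = (if u < nu1 then (if v < nv1 then pv1 u z v else 0)
                               else (if v < nv2 then pv2 (u - nu1) z v else 0))" for u z v
  define pw0 where "pw0 u v x w = (if u < nu1 then (if v < nv1 then (if w < nw1 then pw1 u v x w else 0) else (if w = 0 then 1 else 0))
                                 else (if v < nv2 then (if w < nw2 then pw2 (u - nu1) v x w else 0) else (if w = 0 then 1 else 0)))"
    for u v x w
  define xh0 where "xh0 u w z = (if u < nu1 then xh1 u w z else xh2 (u - nu1) w z)" for u w z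
  define zh0 where "zh0 u v x = (if u < nu1 then zh1 u v x else zh2 (u - nu1) v x)" for u v x
  define rho where "rho c1 c2 u = (if u < nu1 then c1 else (c2::real))" for c1 c2 u
  have V1: "validU nu1 pu1" "validV nu1 nv1 pv1" "validW nu1 nv1 nw1 pw1" using ok1 by (auto simp: ok_def)
  have V2: "validU nu2 pu2" "validV nu2 nv2 pv2" "validW nu2 nv2 nw2 pw2" using ok2 by (auto simp: ok_def)
  have nw1: "0 < nw1" using ok_pos[OF ok1] by simp
  have VV0: "validV nu nv pv0"
    unfolding validV_def
  proof (intro conjI allI impI)
    fix u z v show "0 \<le> pv0 u z v" using V1 V2 by (simp add: pv0_def validV_def)
  next
    fix u z assume u: "u < nu"
    show "(\<Sum>v<nv. pv0 u z v) = 1"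
    proof (cases "u < nu1")
      case True
      then have "(\<Sum>v<nv. pv0 u z v) = (\<Sum>v<nv. if v < nv1 then pv1 u z v else 0)" by (simp add: pv0_def)
      also have "\<dots> = (\<Sum>v<nv1. pv1 u z v)" by (rule sum_lt_restrict) (simp add: nv_def)
      finally show ?thesis using V1 True by (simp add: validV_def)
    next
      case False
      then have "(\<Sum>v<nv. pv0 u z v) = (\<Sum>v<nv. if v < nv2 then pv2 (u - nu1) z v else 0)" by (simp add: pv0_def)
      also have "\<dots> = (\<Sum>v<nv2. pv2 (u - nu1) z v)" by (rule sum_lt_restrict) (simp add: nv_def)
      finally show ?thesis using V2 False u by (simp add: validV_def nu_def)
    qed
  qed
  have VW0: "validW nu nv nw pw0"
    unfolding validW_def
  proof (intro conjI allI impI)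
    fix u v x w show "0 \<le> pw0 u v x w" using V1 V2 by (simp add: pw0_def validW_def)
  next
    fix u v x assume u: "u < nu" and v: "v < nv"
    have d: "(\<Sum>w<nw. if w = 0 then 1 else 0 :: real) = 1" using nw1 by (simp add: nw_def)
    show "(\<Sum>w<nw. pw0 u v x w) = 1"
    proof (cases "u < nu1")
      case True
      show ?thesis
      proof (cases "v < nv1")
        case True2: True
        have "(\<Sum>w<nw. pw0 u v x w) = (\<Sum>w<nw. if w < nw1 then pw1 u v x w else 0)" using True True2 by (simp add: pw0_def)
        also have "\<dots> = (\<Sum>w<nw1. pw1 u v x w)" by (rule sum_lt_restrict) (simp add: nw_def)
        finally show ?thesis using V1 True True2 by (simp add: validW_def)
      next
        case False
        then have "(\<Sum>w<nw. pw0 u v x w) = (\<Sum>w<nw. if w = 0 then 1 else 0)" using True by (simp add: pw0_def)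
        then show ?thesis using d by simp
      qed
    next
      case False
      show ?thesis
      proof (cases "v < nv2")
        case True2: True
        have "(\<Sum>w<nw. pw0 u v x w) = (\<Sum>w<nw. if w < nw2 then pw2 (u - nu1) v x w else 0)" using False True2 by (simp add: pw0_def)
        also have "\<dots> = (\<Sum>w<nw2. pw2 (u - nu1) v x w)" by (rule sum_lt_restrict) (simp add: nw_def)
        finally show ?thesis using V2 False True2 u by (simp add: validW_def nu_def)
      next
        case False2: False
        then have "(\<Sum>w<nw. pw0 u v x w) = (\<Sum>w<nw. if w = 0 then 1 else 0)" using False by (simp add: pw0_def)
        then show ?thesis using d by simp
      qed
    qed
  qed
  have VUc: "validU nu (\<lambda>y u. rho c1 c2 u * pu0 y u)" if "0 \<le> c1" "0 \<le> c2" "c1 + c2 = 1" for c1 c2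
    unfolding validU_def
  proof (intro conjI allI)
    fix y u show "0 \<le> rho c1 c2 u * pu0 y u" using V1 V2 that by (simp add: rho_def pu0_def validU_def)
  next
    fix y
    have "(\<Sum>u<nu. rho c1 c2 u * pu0 y u) = (\<Sum>u<nu1. c1 * pu1 y u) + (\<Sum>u<nu2. c2 * pu2 y u)"
      unfolding nu_def sum_lessThan_add_split by (simp add: rho_def pu0_def)
    also have "\<dots> = c1 + c2" using V1 V2 by (simp add: validU_def sum_distrib_left[symmetric])
    finally show "(\<Sum>u<nu. rho c1 c2 u * pu0 y u) = 1" using that by simp
  qed
  let ?Om = "outcomes nu nv nw :: ('x \<times> 'y \<times> 'z \<times> nat \<times> nat \<times> nat) set"
  let ?Om1 = "outcomes nu1 nv1 nw1 :: ('x \<times> 'y \<times> 'z \<times> nat \<times> nat \<times> nat) set"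
  let ?Om2 = "outcomes nu2 nv2 nw2 :: ('x \<times> 'y \<times> 'z \<times> nat \<times> nat \<times> nat) set"
  let ?P0 = "joint pxy pzx pu0 pv0 pw0"
  let ?P1 = "joint pxy pzx pu1 pv1 pw1"
  let ?P2 = "joint pxy pzx pu2 pv2 pw2"
  define S where "S c1 c2 = joint pxy pzx (\<lambda>y u. rho c1 c2 u * pu0 y u) pv0 pw0" for c1 c2
  let ?I = "{..<nu}"
  have fin: "finite ?Om" "finite ?I" by auto
  have GI: "vU ` ?Om \<subseteq> ?I" by (auto simp: outcomes_def)
  have P0nn: "\<forall>\<omega>\<in>?Om. 0 \<le> ?P0 \<omega>"
  proof
    fix \<omega> :: "'x \<times> 'y \<times> 'z \<times> nat \<times> nat \<times> nat"
    obtain x y z u v w where \<omega>: "\<omega> = (x,y,z,u,v,w)" by (cases \<omega>) auto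
    have "0 \<le> pu0 y u" using V1 V2 by (simp add: pu0_def validU_def)
    moreover have "0 \<le> pv0 u z v" using VV0 by (simp add: validV_def)
    moreover have "0 \<le> pw0 u v x w" using VW0 by (simp add: validW_def)
    ultimately show "0 \<le> ?P0 \<omega>" using pxy pzx \<omega> by (simp add: mult_nonneg_nonneg)
  qed
  have Pr: "S c1 c2 = (\<lambda>\<omega>. rho c1 c2 (vU \<omega>) * ?P0 \<omega>)" for c1 c2
    unfolding S_def by (rule ext) (auto simp: mult_ac)
  have Sw: "S c1 c2 \<omega> = rho c1 c2 (vU \<omega>) * ?P0 \<omega>" for c1 c2 \<omega> by (simp add: Pr)
  have rnn: "\<forall>i\<in>?I. 0 \<le> rho c1 c2 i" if "0 \<le> c1" "0 \<le> c2" for c1 c2 using that by (simp add: rho_def)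
  have Gid: "\<forall>\<omega>\<in>?Om. vU \<omega> = id (vU \<omega>)" by simp
  have Gf2: "\<forall>\<omega>\<in>?Om. vU \<omega> = fst ((\<lambda>\<omega>. (vU \<omega>, vX \<omega>)) \<omega>)" by simp
  have Gf3: "\<forall>\<omega>\<in>?Om. vU \<omega> = fst ((\<lambda>\<omega>. (vU \<omega>, vV \<omega>, vZ \<omega>)) \<omega>)" by simp
  obtain g1 where g1: "\<forall>r. (\<forall>i\<in>?I. r i \<ge> 0) \<longrightarrow> cmi ?Om (\<lambda>\<omega>. r (vU \<omega>) * ?P0 \<omega>) vY vU vZ =
     ent ?Om (\<lambda>\<omega>. r (vU \<omega>) * ?P0 \<omega>) (\<lambda>\<omega>. (vY \<omega>, vZ \<omega>)) - ent ?Om (\<lambda>\<omega>. r (vU \<omega>) * ?P0 \<omega>) vZ + (\<Sum>i\<in>?I. r i * g1 i)"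
    using cmi_lin2[where g=id and A=vY and B=vU and C=vZ, OF fin GI P0nn Gid] by (elim exE) (rule that)
  obtain g2 where g2: "\<forall>r. (\<forall>i\<in>?I. r i \<ge> 0) \<longrightarrow> cmi ?Om (\<lambda>\<omega>. r (vU \<omega>) * ?P0 \<omega>) vZ vV (\<lambda>\<omega>. (vU \<omega>, vX \<omega>)) = (\<Sum>i\<in>?I. r i * g2 i)"
    using cmi_lin1[where g=fst and A=vZ and B=vV and C="\<lambda>\<omega>. (vU \<omega>, vX \<omega>)", OF fin GI P0nn Gf2] by (elim exE) (rule that)
  obtain g3 where g3: "\<forall>r. (\<forall>i\<in>?I. r i \<ge> 0) \<longrightarrow> cmi ?Om (\<lambda>\<omega>. r (vU \<omega>) * ?P0 \<omega>) vX vW (\<lambda>\<omega>. (vU \<omega>, vV \<omega>, vZ \<omega>)) = (\<Sum>i\<in>?I. r i * g3 i)"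
    using cmi_lin1[where g=fst and A=vX and B=vW and C="\<lambda>\<omega>. (vU \<omega>, vV \<omega>, vZ \<omega>)", OF fin GI P0nn Gf3] by (elim exE) (rule that)
  obtain g4 where g4: "\<forall>r. (\<Sum>\<omega>\<in>?Om. (r (vU \<omega>) * ?P0 \<omega>) * dx (vX \<omega>) (xh0 (vU \<omega>) (vW \<omega>) (vZ \<omega>))) = (\<Sum>i\<in>?I. r i * g4 i)"
    using sum_lin[where P="?P0" and F="\<lambda>\<omega>. dx (vX \<omega>) (xh0 (vU \<omega>) (vW \<omega>) (vZ \<omega>))", OF fin GI] by (elim exE) (rule that)
  obtain g5 where g5: "\<forall>r. (\<Sum>\<omega>\<in>?Om. (r (vU \<omega>) * ?P0 \<omega>) * dz (vZ \<omega>) (zh0 (vU \<omega>) (vV \<omega>) (vX \<omega>))) = (\<Sum>i\<in>?I. r i * g5 i)"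
    using sum_lin[where P="?P0" and F="\<lambda>\<omega>. dz (vZ \<omega>) (zh0 (vU \<omega>) (vV \<omega>) (vX \<omega>))", OF fin GI] by (elim exE) (rule that)
  have lin: "(\<Sum>i\<in>?I. rho a b i * g i) = a * (\<Sum>i\<in>?I. rho 1 0 i * g i) + b * (\<Sum>i\<in>?I. rho 0 1 i * g i)" for g
  proof -
    have "rho a b i * g i = a * (rho 1 0 i * g i) + b * (rho 0 1 i * g i)" for i by (simp add: rho_def)
    then show ?thesis by (simp add: sum.distrib sum_distrib_left)
  qed
  have ab0: "a + b = 1" "0 \<le> a" "0 \<le> b" using ab by auto
  have VUab: "validU nu (\<lambda>y u. rho a b u * pu0 y u)" by (rule VUc) (use ab in auto)
  have VU10: "validU nu (\<lambda>y u. rho 1 0 u * pu0 y u)" by (rule VUc) auto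
  have VU01: "validU nu (\<lambda>y u. rho 0 1 u * pu0 y u)" by (rule VUc) auto
  have eYZ: "ent ?Om (S c1 c2) (\<lambda>\<omega>. (vY \<omega>, vZ \<omega>)) = ent ?Om (S a b) (\<lambda>\<omega>. (vY \<omega>, vZ \<omega>))"
    if "validU nu (\<lambda>y u. rho c1 c2 u * pu0 y u)" for c1 c2
    unfolding S_def by (rule ent_marg_eq, rule marg_joint_u[OF that VUab VV0 VV0 VW0 VW0]) simp
  have eZ: "ent ?Om (S c1 c2) vZ = ent ?Om (S a b) vZ"
    if "validU nu (\<lambda>y u. rho c1 c2 u * pu0 y u)" for c1 c2
    unfolding S_def by (rule ent_marg_eq, rule marg_joint_u[OF that VUab VV0 VV0 VW0 VW0]) simp
  have q1: "cmi ?Om (S a b) vY vU vZ = a * cmi ?Om (S 1 0) vY vU vZ + b * cmi ?Om (S 0 1) vY vU vZ"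
  proof -
    have "cmi ?Om (S c1 c2) vY vU vZ = ent ?Om (S a b) (\<lambda>\<omega>. (vY \<omega>, vZ \<omega>)) - ent ?Om (S a b) vZ + (\<Sum>i\<in>?I. rho c1 c2 i * g1 i)"
      if "0 \<le> c1" "0 \<le> c2" "validU nu (\<lambda>y u. rho c1 c2 u * pu0 y u)" for c1 c2
      using mp[OF spec[OF g1, of "rho c1 c2"] rnn[OF that(1,2)]] eYZ[OF that(3)] eZ[OF that(3)]
      unfolding Pr[symmetric] by simp
    note h = this
    define E where "E = ent ?Om (S a b) (\<lambda>\<omega>. (vY \<omega>, vZ \<omega>)) - ent ?Om (S a b) vZ"
    have hab: "cmi ?Om (S a b) vY vU vZ = E + (\<Sum>i\<in>?I. rho a b i * g1 i)"
      using h[OF ab0(2,3) VUab] by (simp add: E_def)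
    have h10: "cmi ?Om (S 1 0) vY vU vZ = E + (\<Sum>i\<in>?I. rho 1 0 i * g1 i)"
      using h[of 1 0, OF _ _ VU10] by (simp add: E_def)
    have h01: "cmi ?Om (S 0 1) vY vU vZ = E + (\<Sum>i\<in>?I. rho 0 1 i * g1 i)"
      using h[of 0 1, OF _ _ VU01] by (simp add: E_def)
    have "a * (E + (\<Sum>i\<in>?I. rho 1 0 i * g1 i)) + b * (E + (\<Sum>i\<in>?I. rho 0 1 i * g1 i))
        = (a + b) * E + (a * (\<Sum>i\<in>?I. rho 1 0 i * g1 i) + b * (\<Sum>i\<in>?I. rho 0 1 i * g1 i))"
      by (simp only: distrib_left distrib_right add_ac)
    then show ?thesis unfolding hab h10 h01 lin[of g1] using ab0(1) by simp
  qed
  have q2: "cmi ?Om (S a b) vZ vV (\<lambda>\<omega>. (vU \<omega>, vX \<omega>)) = a * cmi ?Om (S 1 0) vZ vV (\<lambda>\<omega>. (vU \<omega>, vX \<omega>)) + b * cmi ?Om (S 0 1) vZ vV (\<lambda>\<omega>. (vU \<omega>, vX \<omega>))"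
    using mp[OF spec[OF g2, of "rho a b"] rnn[OF ab0(2,3)]] mp[OF spec[OF g2, of "rho 1 0"] rnn] mp[OF spec[OF g2, of "rho 0 1"] rnn]
    unfolding Pr[symmetric] by (simp add: lin)
  have q3: "cmi ?Om (S a b) vX vW (\<lambda>\<omega>. (vU \<omega>, vV \<omega>, vZ \<omega>)) = a * cmi ?Om (S 1 0) vX vW (\<lambda>\<omega>. (vU \<omega>, vV \<omega>, vZ \<omega>)) + b * cmi ?Om (S 0 1) vX vW (\<lambda>\<omega>. (vU \<omega>, vV \<omega>, vZ \<omega>))"
    using mp[OF spec[OF g3, of "rho a b"] rnn[OF ab0(2,3)]] mp[OF spec[OF g3, of "rho 1 0"] rnn] mp[OF spec[OF g3, of "rho 0 1"] rnn]
    unfolding Pr[symmetric] by (simp add: lin)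
  have q4: "(\<Sum>\<omega>\<in>?Om. S a b \<omega> * dx (vX \<omega>) (xh0 (vU \<omega>) (vW \<omega>) (vZ \<omega>))) =
     a * (\<Sum>\<omega>\<in>?Om. S 1 0 \<omega> * dx (vX \<omega>) (xh0 (vU \<omega>) (vW \<omega>) (vZ \<omega>))) + b * (\<Sum>\<omega>\<in>?Om. S 0 1 \<omega> * dx (vX \<omega>) (xh0 (vU \<omega>) (vW \<omega>) (vZ \<omega>)))"
    unfolding Sw g4[rule_format] by (rule lin)
  have q5: "(\<Sum>\<omega>\<in>?Om. S a b \<omega> * dz (vZ \<omega>) (zh0 (vU \<omega>) (vV \<omega>) (vX \<omega>))) =
     a * (\<Sum>\<omega>\<in>?Om. S 1 0 \<omega> * dz (vZ \<omega>) (zh0 (vU \<omega>) (vV \<omega>) (vX \<omega>))) + b * (\<Sum>\<omega>\<in>?Om. S 0 1 \<omega> * dz (vZ \<omega>) (zh0 (vU \<omega>) (vV \<omega>) (vX \<omega>)))"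
    unfolding Sw g5[rule_format] by (rule lin)
  have n1: "nu1 \<le> nu" "nv1 \<le> nv" "nw1 \<le> nw" "nv2 \<le> nv" "nw2 \<le> nw" by (auto simp: nu_def nv_def nw_def)
  have T1a: "id ` ?Om1 \<subseteq> ?Om" using n1 by (auto simp: outcomes_def)
  have T1b: "inj_on id ?Om1" by simp
  have T1c: "\<And>\<omega>. \<omega> \<in> ?Om1 \<Longrightarrow> S 1 0 (id \<omega>) = ?P1 \<omega>"
    by (auto simp: S_def rho_def pu0_def pv0_def pw0_def outcomes_def)
  have T1d: "\<And>\<omega>. \<omega> \<in> ?Om - id ` ?Om1 \<Longrightarrow> S 1 0 \<omega> = 0"
    by (auto simp: S_def rho_def pu0_def pv0_def pw0_def outcomes_def split: if_splits)
  note tr1 = cmi_transport[OF finite_outcomes finite_outcomes T1a T1b, where Pb="S 1 0" and Pa="?P1", OF T1c T1d, where fa=id and fb=id and fc=id]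
  note st1 = sum_transport[OF finite_outcomes finite_outcomes T1a T1b, where Pb="S 1 0" and Pa="?P1", OF T1c T1d]
  have c11: "cmi ?Om1 ?P1 vY vU vZ = cmi ?Om (S 1 0) vY vU vZ" by (rule tr1) auto
  have c12: "cmi ?Om1 ?P1 vZ vV (\<lambda>\<omega>. (vU \<omega>, vX \<omega>)) = cmi ?Om (S 1 0) vZ vV (\<lambda>\<omega>. (vU \<omega>, vX \<omega>))" by (rule tr1) auto
  have c13: "cmi ?Om1 ?P1 vX vW (\<lambda>\<omega>. (vU \<omega>, vV \<omega>, vZ \<omega>)) = cmi ?Om (S 1 0) vX vW (\<lambda>\<omega>. (vU \<omega>, vV \<omega>, vZ \<omega>))" by (rule tr1) auto
  have c14: "(\<Sum>\<omega>\<in>?Om1. ?P1 \<omega> * dx (vX \<omega>) (xh1 (vU \<omega>) (vW \<omega>) (vZ \<omega>))) = (\<Sum>\<omega>\<in>?Om. S 1 0 \<omega> * dx (vX \<omega>) (xh0 (vU \<omega>) (vW \<omega>) (vZ \<omega>)))"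
    by (rule st1) (auto simp: xh0_def outcomes_def)
  have c15: "(\<Sum>\<omega>\<in>?Om1. ?P1 \<omega> * dz (vZ \<omega>) (zh1 (vU \<omega>) (vV \<omega>) (vX \<omega>))) = (\<Sum>\<omega>\<in>?Om. S 1 0 \<omega> * dz (vZ \<omega>) (zh0 (vU \<omega>) (vV \<omega>) (vX \<omega>)))"
    by (rule st1) (auto simp: zh0_def outcomes_def)
  define h2 :: "'x \<times> 'y \<times> 'z \<times> nat \<times> nat \<times> nat \<Rightarrow> 'x \<times> 'y \<times> 'z \<times> nat \<times> nat \<times> nat"
    where "h2 = (\<lambda>(x,y,z,u,v,w). (x,y,z,u + nu1,v,w))"
  have T2a: "h2 ` ?Om2 \<subseteq> ?Om" using n1 by (auto simp: outcomes_def h2_def nu_def)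
  have T2b: "inj_on h2 ?Om2" by (auto simp: inj_on_def h2_def)
  have T2c: "\<And>\<omega>. \<omega> \<in> ?Om2 \<Longrightarrow> S 0 1 (h2 \<omega>) = ?P2 \<omega>"
    by (auto simp: S_def rho_def pu0_def pv0_def pw0_def outcomes_def h2_def)
  have T2d: "\<And>\<omega>. \<omega> \<in> ?Om - h2 ` ?Om2 \<Longrightarrow> S 0 1 \<omega> = 0"
  proof -
    fix \<omega> assume om: "\<omega> \<in> ?Om - h2 ` ?Om2"
    obtain x y z u v w where \<omega>: "\<omega> = (x,y,z,u,v,w)" by (cases \<omega>) auto
    show "S 0 1 \<omega> = 0"
    proof (cases "u < nu1")
      case True then show ?thesis by (simp add: \<omega> S_def rho_def)
    next
      case False
      have "\<not> (v < nv2 \<and> w < nw2)"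
      proof
        assume vw: "v < nv2 \<and> w < nw2"
        have "\<omega> = h2 (x,y,z,u - nu1,v,w)" using False \<omega> by (simp add: h2_def)
        moreover have "(x,y,z,u - nu1,v,w) \<in> ?Om2" using vw om \<omega> False by (auto simp: nu_def)
        ultimately show False using om by blast
      qed
      then show ?thesis using False by (auto simp: \<omega> S_def pv0_def pw0_def)
    qed
  qed
  have iu: "inj_on (\<lambda>u. u - nu1) S'" if "S' \<subseteq> {nu1..}" for S'
  proof (rule inj_onI)
    fix p q assume pq: "p \<in> S'" "q \<in> S'" "p - nu1 = q - nu1"
    then have "nu1 \<le> p" "nu1 \<le> q" using that by auto
    then show "p = q" using pq(3) by arith
  qed
  note tr2 = cmi_transport[OF finite_outcomes finite_outcomes T2a T2b, where Pb="S 0 1" and Pa="?P2", OF T2c T2d]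
  note st2 = sum_transport[OF finite_outcomes finite_outcomes T2a T2b, where Pb="S 0 1" and Pa="?P2", OF T2c T2d]
  have c21: "cmi ?Om2 ?P2 vY vU vZ = cmi ?Om (S 0 1) vY vU vZ"
    by (rule tr2[where fa=id and fb="\<lambda>u. u - nu1" and fc=id]) (auto simp: h2_def intro!: iu)
  have c22: "cmi ?Om2 ?P2 vZ vV (\<lambda>\<omega>. (vU \<omega>, vX \<omega>)) = cmi ?Om (S 0 1) vZ vV (\<lambda>\<omega>. (vU \<omega>, vX \<omega>))"
    by (rule tr2[where fa=id and fb=id and fc="\<lambda>(a, c). ((\<lambda>u. u - nu1) a, id c)"]) (auto simp: h2_def intro!: iu inj_on_pair)
  have c23: "cmi ?Om2 ?P2 vX vW (\<lambda>\<omega>. (vU \<omega>, vV \<omega>, vZ \<omega>)) = cmi ?Om (S 0 1) vX vW (\<lambda>\<omega>. (vU \<omega>, vV \<omega>, vZ \<omega>))"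
    by (rule tr2[where fa=id and fb=id and fc="\<lambda>(a, c). ((\<lambda>u. u - nu1) a, id c)"]) (auto simp: h2_def intro!: iu inj_on_pair)
  have c24: "(\<Sum>\<omega>\<in>?Om2. ?P2 \<omega> * dx (vX \<omega>) (xh2 (vU \<omega>) (vW \<omega>) (vZ \<omega>))) = (\<Sum>\<omega>\<in>?Om. S 0 1 \<omega> * dx (vX \<omega>) (xh0 (vU \<omega>) (vW \<omega>) (vZ \<omega>)))"
    by (rule st2) (auto simp: xh0_def h2_def)
  have c25: "(\<Sum>\<omega>\<in>?Om2. ?P2 \<omega> * dz (vZ \<omega>) (zh2 (vU \<omega>) (vV \<omega>) (vX \<omega>))) = (\<Sum>\<omega>\<in>?Om. S 0 1 \<omega> * dz (vZ \<omega>) (zh0 (vU \<omega>) (vV \<omega>) (vX \<omega>)))"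
    by (rule st2) (auto simp: zh0_def h2_def)
  have cmb: "a * p + b * q \<le> a * P + b * Q" if "p \<le> P" "q \<le> Q" for p q P Q :: real
    using ab0 that by (intro add_mono mult_left_mono) auto
  have D: "a * Dx + b * Dx = Dx" "a * Dz + b * Dz = Dz" using ab0(1) by (simp_all add: distrib_right[symmetric])
  have o1: "cmi ?Om1 ?P1 vY vU vZ \<le> A1" "cmi ?Om1 ?P1 vZ vV (\<lambda>\<omega>. (vU \<omega>, vX \<omega>)) \<le> A2"
     "cmi ?Om1 ?P1 vX vW (\<lambda>\<omega>. (vU \<omega>, vV \<omega>, vZ \<omega>)) \<le> A3"
     "(\<Sum>\<omega>\<in>?Om1. ?P1 \<omega> * dx (vX \<omega>) (xh1 (vU \<omega>) (vW \<omega>) (vZ \<omega>))) \<le> Dx"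
     "(\<Sum>\<omega>\<in>?Om1. ?P1 \<omega> * dz (vZ \<omega>) (zh1 (vU \<omega>) (vV \<omega>) (vX \<omega>))) \<le> Dz"
    using ok1 by (simp_all add: ok_def)
  have o2: "cmi ?Om2 ?P2 vY vU vZ \<le> B1" "cmi ?Om2 ?P2 vZ vV (\<lambda>\<omega>. (vU \<omega>, vX \<omega>)) \<le> B2"
     "cmi ?Om2 ?P2 vX vW (\<lambda>\<omega>. (vU \<omega>, vV \<omega>, vZ \<omega>)) \<le> B3"
     "(\<Sum>\<omega>\<in>?Om2. ?P2 \<omega> * dx (vX \<omega>) (xh2 (vU \<omega>) (vW \<omega>) (vZ \<omega>))) \<le> Dx"
     "(\<Sum>\<omega>\<in>?Om2. ?P2 \<omega> * dz (vZ \<omega>) (zh2 (vU \<omega>) (vV \<omega>) (vX \<omega>))) \<le> Dz"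
    using ok2 by (simp_all add: ok_def)
  have "ok pxy pzx dx dz Dx Dz nu nv nw (\<lambda>y u. rho a b u * pu0 y u) pv0 pw0 xh0 zh0
           (a * A1 + b * B1) (a * A2 + b * B2) (a * A3 + b * B3)"
    unfolding ok_def S_def[symmetric]
  proof (intro conjI VUab VV0 VW0)
    show "cmi ?Om (S a b) vY vU vZ \<le> a * A1 + b * B1"
      unfolding q1 c11[symmetric] c21[symmetric] by (rule cmb) (fact o1 o2)+
    show "cmi ?Om (S a b) vZ vV (\<lambda>\<omega>. (vU \<omega>, vX \<omega>)) \<le> a * A2 + b * B2"
      unfolding q2 c12[symmetric] c22[symmetric] by (rule cmb) (fact o1 o2)+
    show "cmi ?Om (S a b) vX vW (\<lambda>\<omega>. (vU \<omega>, vV \<omega>, vZ \<omega>)) \<le> a * A3 + b * B3"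
      unfolding q3 c13[symmetric] c23[symmetric] by (rule cmb) (fact o1 o2)+
    show "(\<Sum>\<omega>\<in>?Om. S a b \<omega> * dx (vX \<omega>) (xh0 (vU \<omega>) (vW \<omega>) (vZ \<omega>))) \<le> Dx"
      unfolding q4 c14[symmetric] c24[symmetric] using cmb[OF o1(4) o2(4)] D(1) by linarith
    show "(\<Sum>\<omega>\<in>?Om. S a b \<omega> * dz (vZ \<omega>) (zh0 (vU \<omega>) (vV \<omega>) (vX \<omega>))) \<le> Dz"
      unfolding q5 c15[symmetric] c25[symmetric] using cmb[OF o1(5) o2(5)] D(2) by linarith
  qed
  then show ?thesis by blast
qed


theorem lemma1:
  fixes pxy :: "'x::finite \<Rightarrow> 'y::finite \<Rightarrow> real"
    and pzx :: "'x \<Rightarrow> 'z::finite \<Rightarrow> real"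
    and dx :: "'x \<Rightarrow> 'xh::finite \<Rightarrow> real"
    and dz :: "'z \<Rightarrow> 'zh::finite \<Rightarrow> real"
    and Dx Dz :: real
  assumes "\<forall>x y. 0 \<le> pxy x y" and "(\<Sum>x\<in>UNIV. \<Sum>y\<in>UNIV. pxy x y) = 1"
    and "\<forall>x z. 0 \<le> pzx x z" and "\<forall>x. (\<Sum>z\<in>UNIV. pzx x z) = 1"
    and "\<forall>x xh. 0 \<le> dx x xh" and "\<forall>z zh. 0 \<le> dz z zh"
  shows "convex (region pxy pzx dx dz Dx Dz)
    \<and> region pxy pzx dx dz Dx Dz =
      region_bd (\<lambda>nu nv nw. nu \<le> CARD('y) + 4 \<and> nv \<le> CARD('z) * nu + 3
                             \<and> nw \<le> nu * nv * CARD('x) + 1)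
                pxy pzx dx dz Dx Dz"
proof -
  note pxy = assms(1) and pzx = assms(3)
  let ?R = "region pxy pzx dx dz Dx Dz"
  have RE: "?R = {(R1, R2, R3). \<exists>nu nv nw pu pv pw (xhat :: nat \<Rightarrow> nat \<Rightarrow> 'z \<Rightarrow> 'xh) (zhat :: nat \<Rightarrow> nat \<Rightarrow> 'x \<Rightarrow> 'zh).
     ok pxy pzx dx dz Dx Dz nu nv nw pu pv pw xhat zhat R1 R2 R3}"
    unfolding region_def region_bd_eq by simp
  have cv: "convex ?R"
  proof (rule convexI)
    fix p q :: "real \<times> real \<times> real" and a b :: real
    assume p: "p \<in> ?R" and q: "q \<in> ?R" and ab: "0 \<le> a" "0 \<le> b" "a + b = 1"
    obtain A1 A2 A3 where pe: "p = (A1, A2, A3)" by (cases p) auto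
    obtain B1 B2 B3 where qe: "q = (B1, B2, B3)" by (cases q) auto
    obtain nu1 nv1 nw1 pu1 pv1 pw1 and xh1 :: "nat \<Rightarrow> nat \<Rightarrow> 'z \<Rightarrow> 'xh" and zh1 :: "nat \<Rightarrow> nat \<Rightarrow> 'x \<Rightarrow> 'zh"
      where ok1: "ok pxy pzx dx dz Dx Dz nu1 nv1 nw1 pu1 pv1 pw1 xh1 zh1 A1 A2 A3"
      using p unfolding RE pe by auto
    obtain nu2 nv2 nw2 pu2 pv2 pw2 and xh2 :: "nat \<Rightarrow> nat \<Rightarrow> 'z \<Rightarrow> 'xh" and zh2 :: "nat \<Rightarrow> nat \<Rightarrow> 'x \<Rightarrow> 'zh"
      where ok2: "ok pxy pzx dx dz Dx Dz nu2 nv2 nw2 pu2 pv2 pw2 xh2 zh2 B1 B2 B3"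
      using q unfolding RE qe by auto
    obtain nu nv nw pu pv pw and xh :: "nat \<Rightarrow> nat \<Rightarrow> 'z \<Rightarrow> 'xh" and zh :: "nat \<Rightarrow> nat \<Rightarrow> 'x \<Rightarrow> 'zh"
      where okm: "ok pxy pzx dx dz Dx Dz nu nv nw pu pv pw xh zh (a * A1 + b * B1) (a * A2 + b * B2) (a * A3 + b * B3)"
      using mix[OF pxy pzx ok1 ok2 ab] by blast
    show "a *\<^sub>R p + b *\<^sub>R q \<in> ?R"
      unfolding RE pe qe using okm by (simp, blast)
  qed
  have eq: "?R = region_bd (\<lambda>nu nv nw. nu \<le> CARD('y) + 4 \<and> nv \<le> CARD('z) * nu + 3
                             \<and> nw \<le> nu * nv * CARD('x) + 1) pxy pzx dx dz Dx Dz"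
  proof
    show "?R \<subseteq> region_bd (\<lambda>nu nv nw. nu \<le> CARD('y) + 4 \<and> nv \<le> CARD('z) * nu + 3
                             \<and> nw \<le> nu * nv * CARD('x) + 1) pxy pzx dx dz Dx Dz"
    proof
      fix r assume r: "r \<in> ?R"
      obtain R1 R2 R3 where re: "r = (R1, R2, R3)" by (cases r) auto
      obtain nu nv nw pu pv pw and xh :: "nat \<Rightarrow> nat \<Rightarrow> 'z \<Rightarrow> 'xh" and zh :: "nat \<Rightarrow> nat \<Rightarrow> 'x \<Rightarrow> 'zh"
        where okk: "ok pxy pzx dx dz Dx Dz nu nv nw pu pv pw xh zh R1 R2 R3"
        using r unfolding RE re by auto
      show "r \<in> region_bd (\<lambda>nu nv nw. nu \<le> CARD('y) + 4 \<and> nv \<le> CARD('z) * nu + 3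
                             \<and> nw \<le> nu * nv * CARD('x) + 1) pxy pzx dx dz Dx Dz"
        unfolding region_bd_eq re using reduce[OF pxy pzx okk] by blast
    qed
  next
    show "region_bd (\<lambda>nu nv nw. nu \<le> CARD('y) + 4 \<and> nv \<le> CARD('z) * nu + 3
                             \<and> nw \<le> nu * nv * CARD('x) + 1) pxy pzx dx dz Dx Dz \<subseteq> ?R"
      unfolding RE region_bd_eq by blast
  qed
  show ?thesis using cv eq by blast
qed


end
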